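(* Let $L$ be a split regular Hom-Lie color algebra with symmetric root system $\Lambda$, and let $U$ be a vector space complement of $\mathrm{span}_{\mathbb{K}}\{[L_\alpha,L_{-\alpha}]:\alpha\in\Lambda\}$ in $H$. For each class $[\alpha]\in\Lambda/\sim$ put $I_{[\alpha]}:=L_{\Lambda_\alpha}$. Then each $I_{[\alpha]}$ is a well-defined ideal of $L$, $$L=U+\sum_{[\alpha]\in\Lambda/\sim}I_{[\alpha]},$$ and $[I_{[\alpha]},I_{[\beta]}]=0$ whenever $[\alpha]\neq[\beta]$.
   Context: Let $\mathbb{K}$ be a field and $\Gamma$ an abelian group. A bi-character is $\varepsilon:\Gamma\times\Gamma\to\mathbb{K}\setminus\{0\}$ with $\varepsilon(a,b)\varepsilon(b,a)=1$, $\varepsilon(a,b+c)=\varepsilon(a,b)\varepsilon(a,c)$, $\varepsilon(a+b,c)=\varepsilon(a,c)\varepsilon(b,c)$. A Hom-Lie color algebra $(L,[\cdot,\cdot],\phi,\varepsilon)$ is a $\Gamma$-graded space $L=\bigoplus_gL_g$ with bilinear $[\cdot,\cdot]$, $[L_g,L_h]\subset L_{g+h}$, linear $\phi$ with $\phi(L_g)\subset L_g$, $\phi([x,y])=[\phi x,\phi y]$, such that for homogeneous $x,y,z$ of degrees $\bar x,\bar y,\bar z$: $[x,y]=-\varepsilon(\bar x,\bar y)[y,x]$ and $\varepsilon(\bar z,\bar x)[\phi(x),[y,z]]+\varepsilon(\bar x,\bar y)[\phi(y),[z,x]]+\varepsilon(\bar y,\bar z)[\phi(z),[x,y]]=0$;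 regular means $\phi$ bijective. A subalgebra is a graded subspace $A$ with $[A,A]\subset A$, $\phi(A)=A$; abelian if $[A,A]=0$. An ideal is a graded subspace $I$ with $[I,L]\subset I$ and $\phi(I)=I$. $H=\bigoplus_gH_g$ is a maximal abelian graded subalgebra (so $\phi(H_0)=H_0$). For linear $\alpha:H_0\to\mathbb{K}$, $L_\alpha=\{v:[h,v]=\alpha(h)\phi(v)\ \forall h\in H_0\}$; $\Lambda=\{\alpha\in H_0^*\setminus\{0\}:L_\alpha\neq0\}$; $L$ is split if $L=H\oplus(\bigoplus_{\alpha\in\Lambda}L_\alpha)$. $\Lambda$ is symmetric if $\alpha\in\Lambda\Rightarrow-\alpha\in\Lambda$. For $z\in\mathbb{Z}$, $\alpha\phi^{z}:=\alpha\circ(\phi|_{H_0})^{z}$; $\mathbb{N}=\{0,1,2,\dots\}$. Connection: for $\alpha,\beta\in\Lambda$, $\alpha$ is connected to $\beta$ if there exist $k\ge1$ and $\alpha_1,\dots,\alpha_k\in\Lambda$ such that: if $k=1$, $\alpha_1\in\{\alpha\phi^{-n}:n\in\mathbb{N}\}\cap\{\pm\beta\phi^{-m}:m\in\mathbb{N}\}$; if $k\ge2$, then $\alpha_1\in\{\alpha\phi^{-n}:n\in\mathbb{N}\}$, for each $i=1,\dots,k-2$ one has $\alpha_1\phi^{-i}+\alpha_2\phi^{-i}+\alpha_3\phi^{-i+1}+\cdots+\alpha_{i+1}\phi^{-1}\in\Lambda$, and $\alpha_1\phi^{-k+1}+\alpha_2\phi^{-k+1}+\alpha_3\phi^{-k+2}+\cdots+\alpha_k\phi^{-1}\in\{\pm\beta\phi^{-m}:m\in\mathbb{N}\}$.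 Connectedness $\sim$ is an equivalence relation on $\Lambda$; $\Lambda_\alpha:=\{\beta\in\Lambda:\beta\sim\alpha\}$. Define $H_{\Lambda_\alpha}:=\mathrm{span}_{\mathbb{K}}\{[L_\beta,L_{-\beta}]:\beta\in\Lambda_\alpha\}\subset H$, $V_{\Lambda_\alpha}:=\bigoplus_{\beta\in\Lambda_\alpha}L_\beta$, and $L_{\Lambda_\alpha}:=H_{\Lambda_\alpha}\oplus V_{\Lambda_\alpha}$. *)

theory Defs
  imports Complex_Main
begin

text \<open>The ground field is a type 'k of class field; the underlying
space L is the whole of a type 'v, a vector space via scale.
Sums of subspaces are spans of unions.\<close>

definition bicharacter :: "('g::ab_group_add \<Rightarrow> 'g \<Rightarrow> 'k::field) \<Rightarrow> bool" where
  "bicharacter eps \<longleftrightarrow>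
     (\<forall>a b. eps a b \<noteq> 0) \<and>
     (\<forall>a b. eps a b * eps b a = 1) \<and>
     (\<forall>a b c. eps a (b + c) = eps a b * eps a c) \<and>
     (\<forall>a b c. eps (a + b) c = eps a c * eps b c)"

definition internal_direct_sum ::
  "('k::field \<Rightarrow> 'v::ab_group_add \<Rightarrow> 'v) \<Rightarrow> 'i set \<Rightarrow> ('i \<Rightarrow> 'v set) \<Rightarrow> bool" where
  "internal_direct_sum scale I W \<longleftrightarrow>
     (\<forall>i\<in>I. module.subspace scale (W i)) \<and>
     module.span scale (\<Union>i\<in>I. W i) = UNIV \<and>
     (\<forall>F x. finite F \<and> F \<subseteq> I \<and> (\<forall>i\<in>F. x i \<in> W i) \<and> sum x F = 0
            \<longrightarrow> (\<forall>i\<in>F. x i = 0))"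

definition graded_subspace ::
  "('k::field \<Rightarrow> 'v::ab_group_add \<Rightarrow> 'v) \<Rightarrow> ('g \<Rightarrow> 'v set) \<Rightarrow> 'v set \<Rightarrow> bool" where
  "graded_subspace scale Lg A \<longleftrightarrow>
     module.subspace scale A \<and> module.span scale (\<Union>g. A \<inter> Lg g) = A"

definition hom_lie_color ::
  "('k::field \<Rightarrow> 'v::ab_group_add \<Rightarrow> 'v) \<Rightarrow> ('g::ab_group_add \<Rightarrow> 'g \<Rightarrow> 'k)
   \<Rightarrow> ('g \<Rightarrow> 'v set) \<Rightarrow> ('v \<Rightarrow> 'v \<Rightarrow> 'v) \<Rightarrow> ('v \<Rightarrow> 'v) \<Rightarrow> bool" where
  "hom_lie_color scale eps Lg br phi \<longleftrightarrow>
     vector_space scale \<and> bicharacter eps \<and>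
     internal_direct_sum scale UNIV Lg \<and>
     (\<forall>x. Vector_Spaces.linear scale scale (br x)) \<and> (\<forall>y. Vector_Spaces.linear scale scale (\<lambda>x. br x y)) \<and>
     (\<forall>g h x y. x \<in> Lg g \<longrightarrow> y \<in> Lg h \<longrightarrow> br x y \<in> Lg (g + h)) \<and>
     Vector_Spaces.linear scale scale phi \<and>
     (\<forall>g. phi ` Lg g \<subseteq> Lg g) \<and>
     (\<forall>x y. phi (br x y) = br (phi x) (phi y)) \<and>
     (\<forall>a b x y. x \<in> Lg a \<longrightarrow> y \<in> Lg b \<longrightarrow> br x y = - scale (eps a b) (br y x)) \<and>
     (\<forall>a b c x y z. x \<in> Lg a \<longrightarrow> y \<in> Lg b \<longrightarrow> z \<in> Lg c \<longrightarrow>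
        scale (eps c a) (br (phi x) (br y z)) + scale (eps a b) (br (phi y) (br z x))
        + scale (eps b c) (br (phi z) (br x y)) = 0)"

definition regular_hom_lie_color where
  "regular_hom_lie_color scale eps Lg br phi \<longleftrightarrow>
     hom_lie_color scale eps Lg br phi \<and> bij phi"

definition graded_subalgebra where
  "graded_subalgebra scale Lg br phi A \<longleftrightarrow>
     graded_subspace scale Lg A \<and> (\<forall>x\<in>A. \<forall>y\<in>A. br x y \<in> A) \<and> phi ` A = A"

definition abelian_graded_subalgebra where
  "abelian_graded_subalgebra scale Lg br phi A \<longleftrightarrow>
     graded_subalgebra scale Lg br phi A \<and> (\<forall>x\<in>A. \<forall>y\<in>A. br x y = 0)"

definition maximal_abelian_graded_subalgebra where
  "maximal_abelian_graded_subalgebra scale Lg br phi H \<longleftrightarrow>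
     abelian_graded_subalgebra scale Lg br phi H \<and>
     (\<forall>H'. abelian_graded_subalgebra scale Lg br phi H' \<and> H \<subseteq> H' \<longrightarrow> H' = H)"

definition ideal where
  "ideal scale Lg br phi I \<longleftrightarrow>
     graded_subspace scale Lg I \<and> (\<forall>x\<in>I. \<forall>y. br x y \<in> I) \<and> phi ` I = I"

text \<open>Linear functionals on H_0 are represented by functions 'v => 'k that are
linear on H_0 and vanish outside H_0 (so each functional has a unique representative).\<close>
definition dual_on :: "('k::field \<Rightarrow> 'v::ab_group_add \<Rightarrow> 'v) \<Rightarrow> 'v set \<Rightarrow> ('v \<Rightarrow> 'k) set" where
  "dual_on scale H0 = {\<alpha>. (\<forall>x\<in>H0. \<forall>y\<in>H0. \<alpha> (x + y) = \<alpha> x + \<alpha> y) \<and>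
                         (\<forall>c. \<forall>x\<in>H0. \<alpha> (scale c x) = c * \<alpha> x) \<and>
                         (\<forall>x. x \<notin> H0 \<longrightarrow> \<alpha> x = 0)}"

definition root_space where
  "root_space scale br phi H0 \<alpha> = {v. \<forall>h\<in>H0. br h v = scale (\<alpha> h) (phi v)}"

definition roots where
  "roots scale br phi H0 =
     {\<alpha> \<in> dual_on scale H0. \<alpha> \<noteq> (\<lambda>_. 0) \<and> root_space scale br phi H0 \<alpha> \<noteq> {0}}"

definition split_alg where
  "split_alg scale br phi H H0 \<longleftrightarrow>
     internal_direct_sum scale (insert None (Some ` roots scale br phi H0))
       (\<lambda>i. case i of None \<Rightarrow> H | Some \<alpha> \<Rightarrow> root_space scale br phi H0 \<alpha>)"

definition neg_fun :: "('v \<Rightarrow> 'k::ab_group_add) \<Rightarrow> ('v \<Rightarrow> 'k)" where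
  "neg_fun \<alpha> = (\<lambda>x. - \<alpha> x)"

definition symmetric_roots where
  "symmetric_roots scale br phi H0 \<longleftrightarrow>
     (\<forall>\<alpha>\<in>roots scale br phi H0. neg_fun \<alpha> \<in> roots scale br phi H0)"

text \<open>alpha phi^(-n) := alpha o (phi restricted to H_0)^(-n). Since phi is bijective
with phi(H_0) = H_0, the inverse of the restriction is the restriction of inv phi.\<close>
definition phi_neg :: "('v \<Rightarrow> 'v) \<Rightarrow> 'v set \<Rightarrow> nat \<Rightarrow> ('v \<Rightarrow> 'k::zero) \<Rightarrow> ('v \<Rightarrow> 'k)" where
  "phi_neg phi H0 n \<alpha> = (\<lambda>x. if x \<in> H0 then \<alpha> ((inv phi ^^ n) x) else 0)"

text \<open>The i-th partial expression in the definition of connection: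
 al_1 phi^(-i) + al_2 phi^(-i) + al_3 phi^(-i+1) + ... + al_(i+1) phi^(-1).\<close>
definition conn_sum where
  "conn_sum phi H0 (al :: nat \<Rightarrow> 'v \<Rightarrow> 'k::ab_group_add) i =
     (\<lambda>x. phi_neg phi H0 i (al 1) x + (\<Sum>j\<in>{2..i+1}. phi_neg phi H0 (i + 2 - j) (al j) x))"

definition connected where
  "connected scale br phi H0 \<alpha> \<beta> \<longleftrightarrow>
     (\<exists>k al. k \<ge> 1 \<and> (\<forall>i\<in>{1..k}. al i \<in> roots scale br phi H0) \<and>
       (if k = 1 then
          al 1 \<in> {phi_neg phi H0 n \<alpha> | n. True} \<inter>
                  ({phi_neg phi H0 m \<beta> | m. True} \<union> {phi_neg phi H0 m (neg_fun \<beta>) | m. True})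
        else
          al 1 \<in> {phi_neg phi H0 n \<alpha> | n. True} \<and>
          (\<forall>i\<in>{1..k-2}. conn_sum phi H0 al i \<in> roots scale br phi H0) \<and>
          conn_sum phi H0 al (k - 1) \<in>
             {phi_neg phi H0 m \<beta> | m. True} \<union> {phi_neg phi H0 m (neg_fun \<beta>) | m. True}))"

definition root_class where
  "root_class scale br phi H0 \<alpha> = {\<beta> \<in> roots scale br phi H0. connected scale br phi H0 \<beta> \<alpha>}"

definition H_part where
  "H_part scale br phi H0 S =
     module.span scale {br x y | x y \<beta>. \<beta> \<in> S \<and> x \<in> root_space scale br phi H0 \<beta>
                                   \<and> y \<in> root_space scale br phi H0 (neg_fun \<beta>)}"

definition V_part where
  "V_part scale br phi H0 S = module.span scale (\<Union>\<beta>\<in>S. root_space scale br phi H0 \<beta>)"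

definition L_part where
  "L_part scale br phi H0 S =
     module.span scale (H_part scale br phi H0 S \<union> V_part scale br phi H0 S)"

end

theory Submission
  imports Defs "HOL-Library.Function_Algebras"
begin


locale HLC =
  fixes scale :: "'k::field \<Rightarrow> 'v::ab_group_add \<Rightarrow> 'v"
    and eps :: "'g::ab_group_add \<Rightarrow> 'g \<Rightarrow> 'k"
    and Lg :: "'g \<Rightarrow> 'v set"
    and br :: "'v \<Rightarrow> 'v \<Rightarrow> 'v"
    and phi :: "'v \<Rightarrow> 'v"
    and H U :: "'v set"
  assumes reg: "regular_hom_lie_color scale eps Lg br phi"
    and maxab: "maximal_abelian_graded_subalgebra scale Lg br phi H"
    and split: "split_alg scale br phi H (H \<inter> Lg 0)"
    and symm: "symmetric_roots scale br phi (H \<inter> Lg 0)"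
    and U_compl: "module.span scale (U \<union> H_part scale br phi (H \<inter> Lg 0) (roots scale br phi (H \<inter> Lg 0))) = H"
begin

abbreviation "H0 \<equiv> H \<inter> Lg 0"
abbreviation "R \<equiv> roots scale br phi H0"
abbreviation "Lr \<equiv> root_space scale br phi H0"
abbreviation pn :: "nat \<Rightarrow> ('v \<Rightarrow> 'k) \<Rightarrow> 'v \<Rightarrow> 'k" where "pn \<equiv> phi_neg phi H0"
abbreviation "conn \<equiv> connected scale br phi H0"

lemma hlc: "hom_lie_color scale eps Lg br phi" and bijphi: "bij phi"
  using reg unfolding regular_hom_lie_color_def by auto

lemma vs: "vector_space scale" using hlc unfolding hom_lie_color_def by auto

sublocale vector_space scale by (rule vs)

lemma hu: "bicharacter eps \<and> internal_direct_sum scale UNIV Lg \<and>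
     (\<forall>x. Vector_Spaces.linear scale scale (br x)) \<and> (\<forall>y. Vector_Spaces.linear scale scale (\<lambda>x. br x y)) \<and>
     (\<forall>g h x y. x \<in> Lg g \<longrightarrow> y \<in> Lg h \<longrightarrow> br x y \<in> Lg (g + h)) \<and>
     Vector_Spaces.linear scale scale phi \<and>
     (\<forall>g. phi ` Lg g \<subseteq> Lg g) \<and>
     (\<forall>x y. phi (br x y) = br (phi x) (phi y)) \<and>
     (\<forall>a b x y. x \<in> Lg a \<longrightarrow> y \<in> Lg b \<longrightarrow> br x y = - scale (eps a b) (br y x)) \<and>
     (\<forall>a b c x y z. x \<in> Lg a \<longrightarrow> y \<in> Lg b \<longrightarrow> z \<in> Lg c \<longrightarrow>
        scale (eps c a) (br (phi x) (br y z)) + scale (eps a b) (br (phi y) (br z x))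
        + scale (eps b c) (br (phi z) (br x y)) = 0)"
  using hlc unfolding hom_lie_color_def by (elim conjE) (intro conjI; assumption)

lemma bichar: "bicharacter eps" using hu by (elim conjE)
lemma ids: "internal_direct_sum scale UNIV Lg" using hu by (elim conjE)
lemma lin1: "Vector_Spaces.linear scale scale (br x)" using hu by (elim conjE) (erule allE)
lemma lin2: "Vector_Spaces.linear scale scale (\<lambda>x. br x y)" using hu by (elim conjE) (erule allE)
lemma grade: "x \<in> Lg a \<Longrightarrow> y \<in> Lg b \<Longrightarrow> br x y \<in> Lg (a + b)"
proof - assume A: "x \<in> Lg a" "y \<in> Lg b"
  have "\<forall>g h x y. x \<in> Lg g \<longrightarrow> y \<in> Lg h \<longrightarrow> br x y \<in> Lg (g + h)" using hu by (elim conjE)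
  thus ?thesis using A by blast
qed
lemma linphi: "Vector_Spaces.linear scale scale phi" using hu by (elim conjE)
lemma phiLg: "x \<in> Lg a \<Longrightarrow> phi x \<in> Lg a"
proof - assume A: "x \<in> Lg a"
  have "\<forall>g. phi ` Lg g \<subseteq> Lg g" using hu by (elim conjE)
  thus ?thesis using A by blast
qed
lemma phibr: "phi (br x y) = br (phi x) (phi y)"
proof -
  have "\<forall>x y. phi (br x y) = br (phi x) (phi y)" using hu by (elim conjE)
  thus ?thesis by blast
qed
lemma asym: "x \<in> Lg a \<Longrightarrow> y \<in> Lg b \<Longrightarrow> br x y = - scale (eps a b) (br y x)"
proof - assume A: "x \<in> Lg a" "y \<in> Lg b"
  have "\<forall>a b x y. x \<in> Lg a \<longrightarrow> y \<in> Lg b \<longrightarrow> br x y = - scale (eps a b) (br y x)" using hu by (elim conjE)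
  thus ?thesis using A by blast
qed
lemma jac: "x \<in> Lg a \<Longrightarrow> y \<in> Lg b \<Longrightarrow> z \<in> Lg c \<Longrightarrow>
        scale (eps c a) (br (phi x) (br y z)) + scale (eps a b) (br (phi y) (br z x))
        + scale (eps b c) (br (phi z) (br x y)) = 0"
proof - assume A: "x \<in> Lg a" "y \<in> Lg b" "z \<in> Lg c"
  have "\<forall>a b c x y z. x \<in> Lg a \<longrightarrow> y \<in> Lg b \<longrightarrow> z \<in> Lg c \<longrightarrow>
        scale (eps c a) (br (phi x) (br y z)) + scale (eps a b) (br (phi y) (br z x))
        + scale (eps b c) (br (phi z) (br x y)) = 0" using hu by (elim conjE)
  thus ?thesis using A by blast
qed

lemma mh1: "module_hom scale scale (br x)" by (rule module_hom_linearI[OF lin1])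
lemma mh2: "module_hom scale scale (\<lambda>x. br x y)" by (rule module_hom_linearI[OF lin2])
lemma mhphi: "module_hom scale scale phi" by (rule module_hom_linearI[OF linphi])

lemma br_add2: "br x (y + z) = br x y + br x z" using module_hom.add[OF mh1] .
lemma br_add1: "br (x + y) z = br x z + br y z" using module_hom.add[OF mh2] .
lemma br_scale2: "br x (scale c y) = scale c (br x y)" using module_hom.scale[OF mh1] .
lemma br_scale1: "br (scale c x) y = scale c (br x y)" by (simp add: module_hom.scale[OF mh2])
lemma br_zero2[simp]: "br x 0 = 0" using module_hom.zero[OF mh1] .
lemma br_zero1[simp]: "br 0 y = 0" by (simp add: module_hom.zero[OF mh2])
lemma br_neg2: "br x (- y) = - br x y" using module_hom.neg[OF mh1] .
lemma br_neg1: "br (- x) y = - br x y" by (simp add: module_hom.neg[OF mh2])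
lemma br_diff2: "br x (y - z) = br x y - br x z" using module_hom.diff[OF mh1] .
lemma br_diff1: "br (x - y) z = br x z - br y z" using module_hom.diff[OF mh2] .
lemma br_sum2: "br x (sum f A) = (\<Sum>a\<in>A. br x (f a))" using module_hom.sum[OF mh1] .
lemma br_sum1: "br (sum f A) y = (\<Sum>a\<in>A. br (f a) y)" by (simp add: module_hom.sum[OF mh2])
lemma phi_add: "phi (x + y) = phi x + phi y" using module_hom.add[OF mhphi] .
lemma phi_scale: "phi (scale c x) = scale c (phi x)" using module_hom.scale[OF mhphi] .
lemma phi_zero[simp]: "phi 0 = 0" using module_hom.zero[OF mhphi] .
lemma phi_diff: "phi (x - y) = phi x - phi y" using module_hom.diff[OF mhphi] .
lemma phi_sum: "phi (sum f A) = (\<Sum>a\<in>A. phi (f a))" using module_hom.sum[OF mhphi] .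
lemma phi_inv[simp]: "phi (inv phi x) = x" using bijphi by (simp add: bij_is_surj surj_f_inv_f)
lemma inv_phi[simp]: "inv phi (phi x) = x" using bijphi by (simp add: bij_is_inj)
lemma phi_inj: "phi x = phi y \<Longrightarrow> x = y" using bijphi by (metis inv_phi)
lemma inv_add: "inv phi (x + y) = inv phi x + inv phi y" by (rule phi_inj) (simp add: phi_add)
lemma inv_scale: "inv phi (scale c x) = scale c (inv phi x)" by (rule phi_inj) (simp add: phi_scale)
lemma inv_zero[simp]: "inv phi 0 = 0" by (rule phi_inj) simp
lemma phi_eq0: "phi x = 0 \<longleftrightarrow> x = 0" using phi_inj phi_zero by metis

lemma eps0l[simp]: "eps 0 a = 1"
proof -
  have "eps (0+0) a = eps 0 a * eps 0 a" "eps 0 a \<noteq> 0" using bichar unfolding bicharacter_def by blast+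
  thus ?thesis by simp
qed
lemma eps0r[simp]: "eps a 0 = 1"
proof -
  have "eps a (0+0) = eps a 0 * eps a 0" "eps a 0 \<noteq> 0" using bichar unfolding bicharacter_def by blast+
  thus ?thesis by simp
qed
lemma eps_nz: "eps a b \<noteq> 0" using bichar unfolding bicharacter_def by blast

lemma Lg_sub: "subspace (Lg g)" using ids unfolding internal_direct_sum_def by simp
lemma Lg_span: "span (\<Union>g. Lg g) = UNIV" using ids unfolding internal_direct_sum_def by simp
lemma Lg_indep: "finite F \<Longrightarrow> (\<forall>i\<in>F. x i \<in> Lg i) \<Longrightarrow> sum x F = 0 \<Longrightarrow> i \<in> F \<Longrightarrow> x i = 0"
proof -
  assume A: "finite F" "\<forall>i\<in>F. x i \<in> Lg i" "sum x F = 0" "i \<in> F"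
  have "\<forall>F x. finite F \<and> F \<subseteq> UNIV \<and> (\<forall>i\<in>F. x i \<in> Lg i) \<and> sum x F = 0 \<longrightarrow> (\<forall>i\<in>F. x i = 0)"
    using ids unfolding internal_direct_sum_def by (elim conjE)
  thus ?thesis using A by blast
qed

lemma span_family:
  assumes sub: "\<And>i. i \<in> I \<Longrightarrow> subspace (W i)" and v: "v \<in> span (\<Union>i\<in>I. W i)"
  shows "\<exists>F c. finite F \<and> F \<subseteq> I \<and> v = sum c F \<and> (\<forall>i\<in>F. c i \<in> W i)"
proof -
  let ?S = "{v. \<exists>F c. finite F \<and> F \<subseteq> I \<and> v = sum c F \<and> (\<forall>i\<in>F. c i \<in> W i)}"
  have "subspace ?S"
  proof (rule subspaceI)
    show "0 \<in> ?S" by (rule CollectI, rule exI[of _ "{}"]) auto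
  next
    fix x y assume "x \<in> ?S" "y \<in> ?S"
    then obtain F c G d where FG: "finite F" "F \<subseteq> I" "x = sum c F" "\<forall>i\<in>F. c i \<in> W i"
      "finite G" "G \<subseteq> I" "y = sum d G" "\<forall>i\<in>G. d i \<in> W i" by blast
    define e where "e i = (if i \<in> F then c i else 0) + (if i \<in> G then d i else 0)" for i
    have fu: "finite (F \<union> G)" using FG by auto
    have i1: "(F \<union> G) \<inter> F = F" "(F \<union> G) \<inter> G = G" by auto
    have s1: "sum (\<lambda>i. if i \<in> F then c i else 0) (F \<union> G) = sum c F"
      using sum.inter_restrict[OF fu, of c F] i1 by simp
    have s2: "sum (\<lambda>i. if i \<in> G then d i else 0) (F \<union> G) = sum d G"
      using sum.inter_restrict[OF fu, of d G] i1 by simp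
    have "sum e (F \<union> G) = x + y" unfolding e_def sum.distrib s1 s2 using FG by simp
    hence "x + y = sum e (F \<union> G)" by simp
    moreover have "\<forall>i\<in>F \<union> G. e i \<in> W i"
      using FG sub unfolding e_def by (auto intro!: subspace_add subspace_0)
    ultimately show "x + y \<in> ?S" using FG fu by (intro CollectI exI[of _ "F \<union> G"] exI[of _ e]) simp
  next
    fix a x assume "x \<in> ?S"
    then obtain F c where F: "finite F" "F \<subseteq> I" "x = sum c F" "\<forall>i\<in>F. c i \<in> W i" by blast
    have "scale a x = sum (\<lambda>i. scale a (c i)) F" using F by (simp add: scale_sum_right)
    moreover have "\<forall>i\<in>F. scale a (c i) \<in> W i" using F sub by (auto intro: subspace_scale)
    ultimately show "scale a x \<in> ?S" using F by (intro CollectI exI[of _ F] exI[of _ "\<lambda>i. scale a (c i)"]) simp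
  qed
  moreover have "(\<Union>i\<in>I. W i) \<subseteq> ?S"
  proof
    fix x assume "x \<in> (\<Union>i\<in>I. W i)"
    then obtain i where "i \<in> I" "x \<in> W i" by blast
    thus "x \<in> ?S" by (intro CollectI exI[of _ "{i}"] exI[of _ "\<lambda>_. x"]) auto
  qed
  ultimately have "span (\<Union>i\<in>I. W i) \<subseteq> ?S" by (rule span_minimal[rotated])
  thus ?thesis using v by blast
qed

lemma decomp: "\<exists>F c. finite F \<and> v = sum c F \<and> (\<forall>g\<in>F. c g \<in> Lg g)"
  using span_family[of UNIV Lg v] Lg_sub Lg_span by auto

lemma comp_unique:
  assumes F: "finite F" "\<forall>g\<in>F. c g \<in> Lg g" "sum c F \<in> Lg g0" "g \<in> F" "g \<noteq> g0"
  shows "c g = 0"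
proof -
  define z where "z h = (if h \<in> F then c h else 0) - (if h = g0 then sum c F else 0)" for h
  have fi: "finite (insert g0 F)" using F by simp
  have ii: "insert g0 F \<inter> F = F" by auto
  have e1: "sum (\<lambda>h. if h \<in> F then c h else 0) (insert g0 F) = sum c F"
    using sum.inter_restrict[OF fi, of c F] ii by simp
  have e2: "sum (\<lambda>h. if h = g0 then sum c F else 0) (insert g0 F) = sum c F"
    using sum.delta[OF fi, of g0 "\<lambda>_. sum c F"] by simp
  have "sum z (insert g0 F) = 0" unfolding z_def sum_subtractf e1 e2 by simp
  moreover have "\<forall>h\<in>insert g0 F. z h \<in> Lg h"
    using F unfolding z_def by (auto intro!: subspace_diff[OF Lg_sub] subspace_0[OF Lg_sub] subspace_neg[OF Lg_sub])
  ultimately have "z g = 0" using Lg_indep[OF fi] F by blast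
  thus ?thesis using F unfolding z_def by simp
qed

definition hdec :: "'v set \<Rightarrow> bool" where
  "hdec A \<longleftrightarrow> (\<forall>v\<in>A. \<exists>F c. finite F \<and> v = sum c F \<and> (\<forall>g\<in>F. c g \<in> A \<and> c g \<in> Lg g))"

lemma bil_ext:
  assumes hA: "hdec A" and hB: "hdec B" and T: "subspace T"
    and P: "\<And>a b x y. x \<in> A \<Longrightarrow> x \<in> Lg a \<Longrightarrow> y \<in> B \<Longrightarrow> y \<in> Lg b \<Longrightarrow> br x y \<in> T"
    and x: "x \<in> A" and y: "y \<in> B"
  shows "br x y \<in> T"
proof -
  obtain F c where F: "finite F" "x = sum c F" "\<forall>g\<in>F. c g \<in> A \<and> c g \<in> Lg g"
    using hA x unfolding hdec_def by blast
  obtain G d where G: "finite G" "y = sum d G" "\<forall>g\<in>G. d g \<in> B \<and> d g \<in> Lg g"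
    using hB y unfolding hdec_def by blast
  have "br x y = (\<Sum>b\<in>G. \<Sum>a\<in>F. br (c a) (d b))" using F G by (simp add: br_sum1 br_sum2)
  also have "\<dots> \<in> T" using F G P by (intro subspace_sum[OF T] subspace_sum[OF T]) blast
  finally show ?thesis .
qed

lemma span_bil:
  assumes T: "subspace T" and AB: "\<And>a b. a \<in> A \<Longrightarrow> b \<in> B \<Longrightarrow> br a b \<in> T"
    and x: "x \<in> span A" and y: "y \<in> span B"
  shows "br x y \<in> T"
proof -
  have s1: "subspace {y. br a y \<in> T}" for a
    by (rule subspaceI) (auto simp: br_add2 br_scale2 intro: subspace_0[OF T] subspace_add[OF T] subspace_scale[OF T])
  have s2: "subspace {a. \<forall>y\<in>span B. br a y \<in> T}"
    by (rule subspaceI) (auto simp: br_add1 br_scale1 intro: subspace_0[OF T] subspace_add[OF T] subspace_scale[OF T])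
  have "A \<subseteq> {a. \<forall>y\<in>span B. br a y \<in> T}"
  proof
    fix a assume "a \<in> A"
    hence "span B \<subseteq> {y. br a y \<in> T}" using AB by (intro span_minimal s1) auto
    thus "a \<in> {a. \<forall>y\<in>span B. br a y \<in> T}" by auto
  qed
  hence "span A \<subseteq> {a. \<forall>y\<in>span B. br a y \<in> T}" by (intro span_minimal s2)
  thus ?thesis using x y by auto
qed

lemma H_abs: "abelian_graded_subalgebra scale Lg br phi H"
  using maxab unfolding maximal_abelian_graded_subalgebra_def by (rule conjunct1)

lemma H_gs: "graded_subspace scale Lg H"
  using H_abs unfolding abelian_graded_subalgebra_def graded_subalgebra_def by blast
lemma H_phi: "phi ` H = H"
  using H_abs unfolding abelian_graded_subalgebra_def graded_subalgebra_def by blast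
lemma H_ab: "x \<in> H \<Longrightarrow> y \<in> H \<Longrightarrow> br x y = 0"
  using H_abs unfolding abelian_graded_subalgebra_def graded_subalgebra_def by blast

lemma H_sub: "subspace H" using H_gs unfolding graded_subspace_def by blast

lemma hdec_H: "hdec H"
  unfolding hdec_def
proof
  fix v assume v: "v \<in> H"
  have "span (\<Union>g. H \<inter> Lg g) = H" using H_gs unfolding graded_subspace_def by blast
  hence "v \<in> span (\<Union>g\<in>UNIV. H \<inter> Lg g)" using v by simp
  from span_family[OF _ this] show "\<exists>F c. finite F \<and> v = sum c F \<and> (\<forall>g\<in>F. c g \<in> H \<and> c g \<in> Lg g)"
    using H_sub Lg_sub by (auto intro: subspace_inter)
qed

lemma H0_phi: "h \<in> H0 \<Longrightarrow> phi h \<in> H0" using H_phi phiLg by blast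

lemma H0_inv: assumes h: "h \<in> H0" shows "inv phi h \<in> H0"
proof -
  have "h \<in> phi ` H" using h H_phi by simp
  then obtain x where "x \<in> H" "h = phi x" by blast
  hence "inv phi h \<in> H" by simp
  moreover obtain F c where F: "finite F" "inv phi h = sum c F" "\<forall>g\<in>F. c g \<in> Lg g" using decomp by blast
  have "sum (\<lambda>g. phi (c g)) F = phi (inv phi h)" using F by (simp add: phi_sum)
  hence "sum (\<lambda>g. phi (c g)) F \<in> Lg 0" using h by simp
  hence z: "g \<in> F \<Longrightarrow> g \<noteq> 0 \<Longrightarrow> c g = 0" for g
    using comp_unique[of F "\<lambda>g. phi (c g)" 0 g] F phiLg by (auto simp: phi_eq0)
  have "sum c F \<in> Lg 0" using F z by (intro subspace_sum[OF Lg_sub]) (metis subspace_0[OF Lg_sub])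
  ultimately show ?thesis using F by simp
qed

lemma H0_sub: "subspace H0" using H_sub Lg_sub by (rule subspace_inter)
lemma H0_invpow: assumes "h \<in> H0" shows "(inv phi ^^ n) h \<in> H0"
proof (induction n)
  case 0 thus ?case using assms by simp
next
  case (Suc n) thus ?case using H0_inv[OF Suc.IH] by (simp del: Int_iff)
qed

lemma Lr_sub: "subspace (Lr \<alpha>)"
  unfolding root_space_def
  by (rule subspaceI) (auto simp: br_add2 br_scale2 phi_add phi_scale scale_right_distrib)

lemma hdec_Lr: "hdec (Lr \<alpha>)"
  unfolding hdec_def
proof
  fix v assume v: "v \<in> Lr \<alpha>"
  obtain F c where F: "finite F" "v = sum c F" "\<forall>g\<in>F. c g \<in> Lg g" using decomp by blast
  have "c g \<in> Lr \<alpha>" if g: "g \<in> F" for g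
    unfolding root_space_def
  proof (intro CollectI ballI)
    fix h assume h: "h \<in> H0"
    let ?z = "\<lambda>g. br h (c g) - scale (\<alpha> h) (phi (c g))"
    have "sum ?z F = br h v - scale (\<alpha> h) (phi v)"
      using F by (simp add: sum_subtractf br_sum2 phi_sum scale_sum_right)
    also have "\<dots> = 0" using v h unfolding root_space_def by simp
    finally have "sum ?z F = 0" .
    moreover have "\<forall>g\<in>F. ?z g \<in> Lg g" using F h grade[of h 0] phiLg
      by (auto intro!: subspace_diff[OF Lg_sub] subspace_scale[OF Lg_sub])
    ultimately have "?z g = 0" using Lg_indep[OF F(1), of ?z g] g by blast
    thus "br h (c g) = scale (\<alpha> h) (phi (c g))" by simp
  qed
  thus "\<exists>F c. finite F \<and> v = sum c F \<and> (\<forall>g\<in>F. c g \<in> Lr \<alpha> \<and> c g \<in> Lg g)" using F by blast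
qed

abbreviation dual :: "('v \<Rightarrow> 'k) set" where "dual \<equiv> dual_on scale H0"
definition pp :: "('v \<Rightarrow> 'k) \<Rightarrow> 'v \<Rightarrow> 'k" where "pp \<alpha> = (\<lambda>x. if x \<in> H0 then \<alpha> (phi x) else 0)"
definition sg :: "bool \<Rightarrow> ('v \<Rightarrow> 'k) \<Rightarrow> 'v \<Rightarrow> 'k" where "sg b f = (if b then f else - f)"

lemma pn_out: "x \<notin> H0 \<Longrightarrow> pn n f x = 0" by (simp add: phi_neg_def del: Int_iff)
lemma pn_in: "x \<in> H0 \<Longrightarrow> pn n f x = f ((inv phi ^^ n) x)" by (simp add: phi_neg_def del: Int_iff)
lemma dual_out: "f \<in> dual \<Longrightarrow> x \<notin> H0 \<Longrightarrow> f x = 0" by (simp add: dual_on_def del: Int_iff)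
lemma dual_add: "f \<in> dual \<Longrightarrow> x \<in> H0 \<Longrightarrow> y \<in> H0 \<Longrightarrow> f (x + y) = f x + f y"
  by (simp add: dual_on_def del: Int_iff)
lemma dual_scale: "f \<in> dual \<Longrightarrow> x \<in> H0 \<Longrightarrow> f (scale c x) = c * f x"
  by (simp add: dual_on_def del: Int_iff)
lemma dualI: "(\<And>x y. x \<in> H0 \<Longrightarrow> y \<in> H0 \<Longrightarrow> f (x + y) = f x + f y) \<Longrightarrow>
  (\<And>c x. x \<in> H0 \<Longrightarrow> f (scale c x) = c * f x) \<Longrightarrow> (\<And>x. x \<notin> H0 \<Longrightarrow> f x = 0) \<Longrightarrow> f \<in> dual"
  unfolding dual_on_def by (simp del: Int_iff)

lemma pn0: "f \<in> dual \<Longrightarrow> pn 0 f = f"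
  by (rule ext) (simp add: phi_neg_def dual_out del: Int_iff)

lemma pn_pn: "pn m (pn n f) = pn (n + m) f"
proof (rule ext)
  fix x show "pn m (pn n f) x = pn (n + m) f x"
  proof (cases "x \<in> H0")
    case True
    hence "(inv phi ^^ m) x \<in> H0" by (rule H0_invpow)
    thus ?thesis using True by (simp add: pn_in funpow_add del: Int_iff)
  next
    case False thus ?thesis by (simp add: pn_out del: Int_iff)
  qed
qed

lemma pn_add: "pn n (f + g) = pn n f + pn n g"
  by (rule ext) (simp add: phi_neg_def del: Int_iff)
lemma pn_uminus: "pn n (- f) = - pn n f"
  by (rule ext) (simp add: phi_neg_def del: Int_iff)
lemma pn_zero: "pn n 0 = 0"
  by (rule ext) (simp add: phi_neg_def del: Int_iff)
lemma pn_sg: "pn n (sg b f) = sg b (pn n f)"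
  by (simp add: sg_def pn_uminus)

lemma invpow_add: "(inv phi ^^ n) (x + y) = (inv phi ^^ n) x + (inv phi ^^ n) y"
  by (induction n) (simp_all add: inv_add)
lemma invpow_scale: "(inv phi ^^ n) (scale c x) = scale c ((inv phi ^^ n) x)"
  by (induction n) (simp_all add: inv_scale)

lemma pn_dual: assumes f: "f \<in> dual" shows "pn n f \<in> dual"
proof (rule dualI)
  fix x y assume xy: "x \<in> H0" "y \<in> H0"
  hence "x + y \<in> H0" by (rule subspace_add[OF H0_sub])
  thus "pn n f (x + y) = pn n f x + pn n f y"
    using xy by (simp add: pn_in invpow_add dual_add[OF f] H0_invpow del: Int_iff)
next
  fix c x assume x: "x \<in> H0"
  hence "scale c x \<in> H0" by (rule subspace_scale[OF H0_sub])
  thus "pn n f (scale c x) = c * pn n f x"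
    using x by (simp add: pn_in invpow_scale dual_scale[OF f] H0_invpow del: Int_iff)
qed (rule pn_out)

lemma phipow_H0: "x \<in> H0 \<Longrightarrow> (phi ^^ n) x \<in> H0"
proof (induction n)
  case (Suc n) thus ?case using H0_phi[OF Suc.IH[OF Suc.prems]] by (simp del: Int_iff)
qed simp

lemma invpow_phipow: "(inv phi ^^ n) ((phi ^^ n) x) = x"
proof (induction n)
  case (Suc n)
  have a: "(phi ^^ Suc n) x = phi ((phi ^^ n) x)" by simp
  have b: "(inv phi ^^ Suc n) y = (inv phi ^^ n) (inv phi y)" for y
    by (simp only: funpow_Suc_right o_apply)
  show ?case unfolding a b using Suc by simp
qed simp

lemma phipow_eq0: "(phi ^^ n) v = 0 \<Longrightarrow> v = 0"
  by (induction n) (simp_all add: phi_eq0)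

lemma dual_nz: "f \<in> dual \<Longrightarrow> f \<noteq> 0 \<Longrightarrow> \<exists>x\<in>H0. f x \<noteq> 0"
  by (metis dual_out ext zero_fun_apply)

lemma pn_nz: assumes f: "f \<in> dual" "f \<noteq> 0" shows "pn n f \<noteq> 0"
proof
  assume z: "pn n f = 0"
  obtain x where x: "x \<in> H0" "f x \<noteq> 0" using dual_nz[OF f] by blast
  have "(phi ^^ n) x \<in> H0" using x(1) by (rule phipow_H0)
  hence "pn n f ((phi ^^ n) x) = f x" by (simp add: pn_in invpow_phipow del: Int_iff)
  thus False using z x by simp
qed

lemma Lr_pn1: assumes v: "v \<in> Lr \<alpha>" shows "phi v \<in> Lr (pn 1 \<alpha>)"
  unfolding root_space_def
proof (intro CollectI ballI)
  fix h assume h: "h \<in> H0"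
  hence ih: "inv phi h \<in> H0" by (rule H0_inv)
  have "br h (phi v) = phi (br (inv phi h) v)" by (simp add: phibr)
  also have "\<dots> = phi (scale (\<alpha> (inv phi h)) (phi v))" using v ih unfolding root_space_def by simp
  also have "\<dots> = scale (pn 1 \<alpha> h) (phi (phi v))" using h by (simp add: phi_scale pn_in del: Int_iff)
  finally show "br h (phi v) = scale (pn 1 \<alpha> h) (phi (phi v))" .
qed

lemma Lr_pn: "v \<in> Lr \<alpha> \<Longrightarrow> (phi ^^ n) v \<in> Lr (pn n \<alpha>)"
proof (induction n)
  case 0
  have "pn 0 \<alpha> = pn 0 (pn 0 \<alpha>)" by (simp add: pn_pn)
  have "\<forall>h\<in>H0. pn 0 \<alpha> h = \<alpha> h" by (simp add: pn_in del: Int_iff)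
  thus ?case using 0 unfolding root_space_def by (simp del: Int_iff)
next
  case (Suc n)
  have "phi ((phi ^^ n) v) \<in> Lr (pn 1 (pn n \<alpha>))" by (rule Lr_pn1[OF Suc.IH[OF Suc.prems]])
  thus ?case by (simp add: pn_pn)
qed

lemma R_iff: "\<alpha> \<in> R \<longleftrightarrow> \<alpha> \<in> dual \<and> \<alpha> \<noteq> 0 \<and> (\<exists>v. v \<in> Lr \<alpha> \<and> v \<noteq> 0)"
proof -
  have "Lr \<alpha> \<noteq> {0} \<longleftrightarrow> (\<exists>v. v \<in> Lr \<alpha> \<and> v \<noteq> 0)" using subspace_0[OF Lr_sub[of \<alpha>]] by blast
  moreover have "(\<lambda>_. 0) = (0 :: 'v \<Rightarrow> 'k)" by (simp add: zero_fun_def)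
  ultimately show ?thesis unfolding roots_def by simp
qed

lemma R_dual: "\<alpha> \<in> R \<Longrightarrow> \<alpha> \<in> dual" by (simp add: R_iff)
lemma R_nz: "\<alpha> \<in> R \<Longrightarrow> \<alpha> \<noteq> 0" by (simp add: R_iff)

lemma R_pn: assumes a: "\<alpha> \<in> R" shows "pn n \<alpha> \<in> R"
proof -
  obtain v where v: "v \<in> Lr \<alpha>" "v \<noteq> 0" using a by (auto simp: R_iff)
  have "(phi ^^ n) v \<in> Lr (pn n \<alpha>)" "(phi ^^ n) v \<noteq> 0" using v Lr_pn phipow_eq0 by blast+
  thus ?thesis using a pn_dual pn_nz by (auto simp: R_iff)
qed

lemma neg_fun_eq: "neg_fun \<alpha> = - \<alpha>" by (rule ext) (simp add: neg_fun_def)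

lemma R_neg: "\<alpha> \<in> R \<Longrightarrow> - \<alpha> \<in> R"
  using symm unfolding symmetric_roots_def neg_fun_eq by blast

lemma R_sg: "\<alpha> \<in> R \<Longrightarrow> sg b \<alpha> \<in> R" by (simp add: sg_def R_neg)

lemma sg_sg: "sg b (sg c f) = sg (b = c) f" by (simp add: sg_def)

lemma pp_dual: assumes f: "f \<in> dual" shows "pp f \<in> dual"
proof (rule dualI)
  fix x y assume xy: "x \<in> H0" "y \<in> H0"
  hence "x + y \<in> H0" by (rule subspace_add[OF H0_sub])
  thus "pp f (x + y) = pp f x + pp f y"
    using xy by (simp add: pp_def phi_add dual_add[OF f] H0_phi del: Int_iff)
next
  fix c x assume x: "x \<in> H0"
  hence "scale c x \<in> H0" by (rule subspace_scale[OF H0_sub])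
  thus "pp f (scale c x) = c * pp f x"
    using x by (simp add: pp_def phi_scale dual_scale[OF f] H0_phi del: Int_iff)
qed (simp add: pp_def del: Int_iff)

lemma pn1_pp: assumes f: "f \<in> dual" shows "pn 1 (pp f) = f"
proof (rule ext)
  fix x show "pn 1 (pp f) x = f x"
  proof (cases "x \<in> H0")
    case True thus ?thesis using H0_inv[OF True] by (simp add: pn_in pp_def del: Int_iff)
  next
    case False thus ?thesis by (simp add: pn_out dual_out[OF f] del: Int_iff)
  qed
qed

lemma Lr_pp: assumes v: "v \<in> Lr \<alpha>" shows "inv phi v \<in> Lr (pp \<alpha>)"
  unfolding root_space_def
proof (intro CollectI ballI)
  fix h assume h: "h \<in> H0"
  have "phi (br h (inv phi v)) = br (phi h) v" by (simp add: phibr)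
  also have "\<dots> = scale (\<alpha> (phi h)) (phi v)" using v H0_phi[OF h] unfolding root_space_def by simp
  also have "\<dots> = phi (scale (pp \<alpha> h) (phi (inv phi v)))" using h by (simp add: phi_scale pp_def del: Int_iff)
  finally show "br h (inv phi v) = scale (pp \<alpha> h) (phi (inv phi v))" by (rule phi_inj)
qed

lemma R_pp: assumes a: "\<alpha> \<in> R" shows "pp \<alpha> \<in> R"
proof -
  obtain v where v: "v \<in> Lr \<alpha>" "v \<noteq> 0" using a by (auto simp: R_iff)
  have "inv phi v \<in> Lr (pp \<alpha>)" "inv phi v \<noteq> 0" using v Lr_pp by (auto, metis phi_inv phi_zero)
  moreover have "pp \<alpha> \<noteq> 0" using pn1_pp[OF R_dual[OF a]] R_nz[OF a] pn_zero by metis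
  ultimately show ?thesis using a pp_dual R_dual by (auto simp: R_iff)
qed

lemma pp_uminus: "pp (- f) = - pp f" by (rule ext) (simp add: pp_def)

lemma dual_plus: "f \<in> dual \<Longrightarrow> g \<in> dual \<Longrightarrow> f + g \<in> dual"
  by (rule dualI) (simp_all add: dual_add dual_scale dual_out algebra_simps del: Int_iff)

lemma J1:
  assumes x: "x \<in> Lr \<beta>" "x \<in> Lg a" and y: "y \<in> Lr \<gamma>" "y \<in> Lg b"
  shows "br x y \<in> Lr (pn 1 (\<beta> + \<gamma>))"
  unfolding root_space_def
proof (intro CollectI ballI)
  fix h' assume h': "h' \<in> H0"
  define h where "h = inv phi h'"
  have h: "h \<in> H0" unfolding h_def using h' by (rule H0_inv)
  have hh: "h' = phi h" unfolding h_def by simp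
  have h0: "h \<in> Lg 0" using h by simp
  have rx: "br h x = scale (\<beta> h) (phi x)" using x h unfolding root_space_def by simp
  have ry: "br h y = scale (\<gamma> h) (phi y)" using y h unfolding root_space_def by simp
  have J: "scale (eps b 0) (br (phi h) (br x y)) + scale (eps 0 a) (br (phi x) (br y h))
        + scale (eps a b) (br (phi y) (br h x)) = 0" using jac[OF h0 x(2) y(2)] .
  have a1: "br y h = - scale (\<gamma> h) (phi y)" using asym[OF y(2) h0] ry by simp
  have t2: "br (phi x) (br y h) = - scale (\<gamma> h) (phi (br x y))"
    unfolding a1 by (simp add: br_neg2 br_scale2 phibr)
  have a2: "scale (eps a b) (br y x) = - br x y" using asym[OF x(2) y(2)] by simp
  have t3: "scale (eps a b) (br (phi y) (br h x)) = - scale (\<beta> h) (phi (br x y))"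
  proof -
    have "scale (eps a b) (br (phi y) (br h x)) = scale (\<beta> h) (phi (scale (eps a b) (br y x)))"
      unfolding rx by (simp add: br_scale2 phibr phi_scale scale_left_commute)
    also have "\<dots> = - scale (\<beta> h) (phi (br x y))" unfolding a2 by (simp add: module_hom.neg[OF mhphi])
    finally show ?thesis .
  qed
  have "br (phi h) (br x y) = scale (\<beta> h) (phi (br x y)) + scale (\<gamma> h) (phi (br x y))"
  proof -
    have "br (phi h) (br x y) + - scale (\<gamma> h) (phi (br x y)) + - scale (\<beta> h) (phi (br x y)) = 0"
      using J t2 t3 by simp
    thus ?thesis by (simp add: algebra_simps eq_neg_iff_add_eq_0 add_eq_0_iff2)
  qed
  also have "\<dots> = scale (pn 1 (\<beta> + \<gamma>) h') (phi (br x y))"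
    using h' by (simp add: pn_in h_def scale_left_distrib del: Int_iff)
  finally show "br h' (br x y) = scale (pn 1 (\<beta> + \<gamma>) h') (phi (br x y))" unfolding hh .
qed

lemma J2:
  assumes x: "x \<in> Lr \<beta>" "x \<in> Lg a" and z: "z \<in> H" "z \<in> Lg c"
  shows "br x z \<in> Lr (pn 1 \<beta>) \<and> br z x \<in> Lr (pn 1 \<beta>)"
proof
  show xz: "br x z \<in> Lr (pn 1 \<beta>)"
    unfolding root_space_def
  proof (intro CollectI ballI)
    fix h' assume h': "h' \<in> H0"
    define h where "h = inv phi h'"
    have h: "h \<in> H0" unfolding h_def using h' by (rule H0_inv)
    have hh: "h' = phi h" unfolding h_def by simp
    have h0: "h \<in> Lg 0" using h by simp
    have rx: "br h x = scale (\<beta> h) (phi x)" using x h unfolding root_space_def by simp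
    have J: "scale (eps c 0) (br (phi h) (br x z)) + scale (eps 0 a) (br (phi x) (br z h))
        + scale (eps a c) (br (phi z) (br h x)) = 0" using jac[OF h0 x(2) z(2)] .
    have zh: "br z h = 0" using H_ab z(1) h by simp
    have a2: "scale (eps a c) (br z x) = - br x z" using asym[OF x(2) z(2)] by simp
    have t3: "scale (eps a c) (br (phi z) (br h x)) = - scale (\<beta> h) (phi (br x z))"
    proof -
      have "scale (eps a c) (br (phi z) (br h x)) = scale (\<beta> h) (phi (scale (eps a c) (br z x)))"
        unfolding rx by (simp add: br_scale2 phibr phi_scale scale_left_commute)
      also have "\<dots> = - scale (\<beta> h) (phi (br x z))" unfolding a2 by (simp add: module_hom.neg[OF mhphi])
      finally show ?thesis .
    qed
    have "br (phi h) (br x z) + - scale (\<beta> h) (phi (br x z)) = 0" using J t3 zh by simp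
    hence "br (phi h) (br x z) = scale (\<beta> h) (phi (br x z))" by (simp add: add_eq_0_iff2 eq_neg_iff_add_eq_0)
    also have "\<dots> = scale (pn 1 \<beta> h') (phi (br x z))" using h' by (simp add: pn_in h_def del: Int_iff)
    finally show "br h' (br x z) = scale (pn 1 \<beta> h') (phi (br x z))" unfolding hh .
  qed
  have "br z x = - scale (eps c a) (br x z)" using asym[OF z(2) x(2)] .
  thus "br z x \<in> Lr (pn 1 \<beta>)" using xz by (simp add: subspace_neg[OF Lr_sub] subspace_scale[OF Lr_sub])
qed

lemma J3:
  assumes x: "x \<in> Lg a" and y: "y \<in> Lg b" and z: "z \<in> Lg c" and yz: "br y z = 0" and zx: "br z x = 0"
  shows "br (phi z) (br x y) = 0 \<and> br (br x y) (phi z) = 0"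
proof
  have "scale (eps b c) (br (phi z) (br x y)) + scale (eps c a) (br (phi x) (br y z))
        + scale (eps a b) (br (phi y) (br z x)) = 0" using jac[OF z x y] .
  hence "scale (eps b c) (br (phi z) (br x y)) = 0" using yz zx by simp
  thus a: "br (phi z) (br x y) = 0" using eps_nz by simp
  have "br (br x y) (phi z) = - scale (eps (a + b) c) (br (phi z) (br x y))"
    using asym[OF grade[OF x y] phiLg[OF z]] .
  thus "br (br x y) (phi z) = 0" using a by simp
qed

lemma E1: "x \<in> Lr \<beta> \<Longrightarrow> y \<in> Lr \<gamma> \<Longrightarrow> br x y \<in> Lr (pn 1 (\<beta> + \<gamma>))"
  by (rule bil_ext[OF hdec_Lr hdec_Lr Lr_sub J1])

lemma E2a: "x \<in> Lr \<beta> \<Longrightarrow> z \<in> H \<Longrightarrow> br x z \<in> Lr (pn 1 \<beta>)"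
  by (rule bil_ext[OF hdec_Lr hdec_H Lr_sub]) (use J2 in blast)
lemma E2b: "z \<in> H \<Longrightarrow> x \<in> Lr \<beta> \<Longrightarrow> br z x \<in> Lr (pn 1 \<beta>)"
  by (rule bil_ext[OF hdec_H hdec_Lr Lr_sub]) (use J2 in blast)

lemma E3:
  assumes c1: "\<forall>x'\<in>Lr (- \<beta>). \<forall>z\<in>Lr \<gamma>. br x' z = 0"
    and c2: "\<forall>z\<in>Lr \<gamma>. \<forall>x\<in>Lr \<beta>. br z x = 0"
    and x: "x \<in> Lr \<beta>" and x': "x' \<in> Lr (- \<beta>)" and z: "z \<in> Lr \<gamma>"
  shows "br (br x x') (phi z) = 0 \<and> br (phi z) (br x x') = 0"
proof -
  let ?T = "\<lambda>z. {u. br u (phi z) = 0 \<and> br (phi z) u = 0}"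
  have Tsub: "subspace (?T z)" for z
    by (rule subspaceI) (auto simp: br_add1 br_add2 br_scale1 br_scale2)
  have hom: "br x x' \<in> ?T z0" if z0: "z0 \<in> Lr \<gamma>" "z0 \<in> Lg c" for z0 c
  proof (rule bil_ext[OF hdec_Lr hdec_Lr Tsub _ x x'])
    fix a b u v assume "u \<in> Lr \<beta>" "u \<in> Lg a" "v \<in> Lr (- \<beta>)" "v \<in> Lg b"
    thus "br u v \<in> ?T z0" using J3[of u a v b z0 c] c1 c2 z0 by simp
  qed
  let ?S = "{z. br (br x x') (phi z) = 0 \<and> br (phi z) (br x x') = 0}"
  have Ssub: "subspace ?S"
    by (rule subspaceI) (auto simp: br_add1 br_add2 br_scale1 br_scale2 phi_add phi_scale)
  obtain F c where F: "finite F" "z = sum c F" "\<forall>g\<in>F. c g \<in> Lr \<gamma> \<and> c g \<in> Lg g"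
    using hdec_Lr z unfolding hdec_def by blast
  have "sum c F \<in> ?S" using F hom by (intro subspace_sum[OF Ssub]) blast
  thus ?thesis using F by simp
qed

lemma pn_inv: "x \<in> H0 \<Longrightarrow> pn k f (inv phi x) = pn (Suc k) f x"
proof -
  assume x: "x \<in> H0"
  have ix: "inv phi x \<in> H0" using x by (rule H0_inv)
  have "(inv phi ^^ Suc k) x = (inv phi ^^ k) (inv phi x)" by (simp only: funpow_Suc_right o_apply)
  thus ?thesis using x ix by (simp add: pn_in del: Int_iff)
qed

lemma conn_sum_0: "conn_sum phi H0 al 0 = pn 0 (al 1)"
  by (rule ext) (simp add: conn_sum_def)

lemma conn_sum_Suc: "conn_sum phi H0 al (Suc i) = pn 1 (conn_sum phi H0 al i) + pn 1 (al (i+2))"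
proof (rule ext)
  fix x show "conn_sum phi H0 al (Suc i) x = (pn 1 (conn_sum phi H0 al i) + pn 1 (al (i+2))) x"
  proof (cases "x \<in> H0")
    case False thus ?thesis by (simp add: conn_sum_def pn_out del: Int_iff)
  next
    case True
    have l: "conn_sum phi H0 al (Suc i) x = pn (Suc i) (al 1) x + (\<Sum>j\<in>{2..Suc i + 1}. pn (Suc i + 2 - j) (al j) x)"
      by (simp only: conn_sum_def)
    have r: "(pn 1 (conn_sum phi H0 al i) + pn 1 (al (i+2))) x = conn_sum phi H0 al i (inv phi x) + pn 1 (al (i+2)) x"
      using True by (simp add: pn_in del: Int_iff)
    have r2: "conn_sum phi H0 al i (inv phi x) = pn (Suc i) (al 1) x + (\<Sum>j\<in>{2..i+1}. pn (i + 2 - j) (al j) (inv phi x))"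
      by (simp add: conn_sum_def pn_inv[OF True])
    have e: "{2..Suc i + 1} = insert (i+2) {2..i+1}" by auto
    have s1: "(\<Sum>j\<in>{2..Suc i + 1}. pn (Suc i + 2 - j) (al j) x) = pn 1 (al (i+2)) x + (\<Sum>j\<in>{2..i+1}. pn (Suc i + 2 - j) (al j) x)"
      unfolding e by simp
    have s2: "(\<Sum>j\<in>{2..i+1}. pn (Suc i + 2 - j) (al j) x) = (\<Sum>j\<in>{2..i+1}. pn (i + 2 - j) (al j) (inv phi x))"
    proof (rule sum.cong)
      fix j assume "j \<in> {2..i+1}"
      hence "Suc i + 2 - j = Suc (i + 2 - j)" by auto
      thus "pn (Suc i + 2 - j) (al j) x = pn (i + 2 - j) (al j) (inv phi x)" by (simp add: pn_inv[OF True])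
    qed simp
    show ?thesis unfolding l r r2 s1 s2 by (simp add: algebra_simps)
  qed
qed

definition walk :: "('v \<Rightarrow> 'k) \<Rightarrow> ('v \<Rightarrow> 'k) \<Rightarrow> bool" where
  "walk \<alpha> \<beta> \<longleftrightarrow> (\<exists>(k::nat) (s::nat \<Rightarrow> 'v \<Rightarrow> 'k) n m b. k \<ge> 1 \<and> s 0 = pn n \<alpha> \<and> (\<forall>i<k. s i \<in> R) \<and>
     (\<forall>i. 1 \<le> i \<and> i < k \<longrightarrow> (\<exists>a\<in>R. s i = pn 1 (s (i - 1)) + pn 1 a)) \<and> s (k - 1) = sg b (pn m \<beta>))"

lemma walkI: "(k::nat) \<ge> 1 \<Longrightarrow> (s::nat \<Rightarrow> 'v \<Rightarrow> 'k) 0 = pn n \<alpha> \<Longrightarrow> (\<And>i. i < k \<Longrightarrow> s i \<in> R) \<Longrightarrow>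
     (\<And>i. 1 \<le> i \<Longrightarrow> i < k \<Longrightarrow> (\<exists>a\<in>R. s i = pn 1 (s (i - 1)) + pn 1 a)) \<Longrightarrow> s (k - 1) = sg b (pn m \<beta>)
   \<Longrightarrow> walk \<alpha> \<beta>"
  unfolding walk_def by (rule exI[of _ k], rule exI[of _ s], rule exI[of _ n], rule exI[of _ m], rule exI[of _ b]) auto

lemma setpm: assumes "f \<in> {pn m \<beta> | m. True} \<union> {pn m (neg_fun \<beta>) | m. True}"
  shows "\<exists>m bb. f = sg bb (pn m \<beta>)"
proof -
  obtain m where "f = pn m \<beta> \<or> f = pn m (neg_fun \<beta>)" using assms by blast
  thus ?thesis
  proof (elim disjE)
    assume "f = pn m \<beta>" thus ?thesis by (intro exI[of _ m] exI[of _ True]) (simp add: sg_def)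
  next
    assume "f = pn m (neg_fun \<beta>)"
    thus ?thesis by (intro exI[of _ m] exI[of _ False]) (simp add: sg_def neg_fun_eq pn_uminus)
  qed
qed

lemma conn_walk: assumes a: "\<alpha> \<in> R" and b: "\<beta> \<in> R" shows "conn \<alpha> \<beta> \<longleftrightarrow> walk \<alpha> \<beta>"
proof
  assume "conn \<alpha> \<beta>"
  then obtain k al where k: "k \<ge> 1" and alR: "\<forall>i\<in>{1..k}. al i \<in> R" and
    c: "if k = 1 then
          al 1 \<in> {pn n \<alpha> | n. True} \<inter> ({pn m \<beta> | m. True} \<union> {pn m (neg_fun \<beta>) | m. True})
        else
          al 1 \<in> {pn n \<alpha> | n. True} \<and>
          (\<forall>i\<in>{1..k-2}. conn_sum phi H0 al i \<in> R) \<and>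
          conn_sum phi H0 al (k - 1) \<in> {pn m \<beta> | m. True} \<union> {pn m (neg_fun \<beta>) | m. True}"
    unfolding connected_def by blast
  let ?s = "conn_sum phi H0 al"
  have al1: "al 1 \<in> R" using alR k by auto
  have s0: "?s 0 = al 1" using al1 R_dual pn0 by (simp add: conn_sum_0)
  have steps: "\<exists>a\<in>R. ?s i = pn 1 (?s (i - 1)) + pn 1 a" if "1 \<le> i" "i < k" for i
  proof -
    have "?s (Suc (i - 1)) = pn 1 (?s (i - 1)) + pn 1 (al (i - 1 + 2))" by (rule conn_sum_Suc)
    moreover have "Suc (i - 1) = i" "i - 1 + 2 = i + 1" using that by auto
    moreover have "al (i + 1) \<in> R" using alR that by auto
    ultimately show ?thesis by auto
  qed
  have negb: "pn m (neg_fun \<beta>) = sg False (pn m \<beta>)" for m by (simp add: sg_def neg_fun_eq pn_uminus)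
  have posb: "pn m \<beta> = sg True (pn m \<beta>)" for m by (simp add: sg_def)
  show "walk \<alpha> \<beta>"
  proof (cases "k = 1")
    case True
    have c1: "al 1 \<in> {pn n \<alpha> | n. True}" and e: "al 1 \<in> {pn m \<beta> | m. True} \<union> {pn m (neg_fun \<beta>) | m. True}"
      using c True by simp_all
    from c1 obtain n where n: "al 1 = pn n \<alpha>" by blast
    from setpm[OF e] obtain m bb where "al 1 = sg bb (pn m \<beta>)" by blast
    thus ?thesis using True n s0 al1 by (intro walkI[of k ?s n \<alpha> bb m \<beta>]) auto
  next
    case False
    hence k2: "k \<ge> 2" using k by auto
    have c1: "al 1 \<in> {pn n \<alpha> | n. True}" using c False by simp
    from c1 obtain n where n: "al 1 = pn n \<alpha>" by blast
    have mid: "\<forall>i\<in>{1..k-2}. ?s i \<in> R" using c False by simp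
    have e: "?s (k - 1) \<in> {pn m \<beta> | m. True} \<union> {pn m (neg_fun \<beta>) | m. True}" using c False by simp
    from setpm[OF e] obtain m bb where last: "?s (k - 1) = sg bb (pn m \<beta>)" by blast
    show ?thesis
    proof (rule walkI[of k ?s n \<alpha> bb m \<beta>])
      fix i assume i: "i < k"
      show "?s i \<in> R"
      proof -
        have "i = 0 \<or> i \<in> {1..k-2} \<or> i = k - 1" using i by auto
        thus ?thesis using s0 al1 mid last R_sg R_pn b by auto
      qed
    qed (use k s0 n steps last in auto)
  qed
next
  assume "walk \<alpha> \<beta>"
  then obtain k :: nat and s :: "nat \<Rightarrow> 'v \<Rightarrow> 'k" and n m bb where k: "k \<ge> 1" and s0: "s 0 = pn n \<alpha>" and sR: "\<forall>i<k. s i \<in> R"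
    and st: "\<forall>i. 1 \<le> i \<and> i < k \<longrightarrow> (\<exists>a\<in>R. s i = pn 1 (s (i - 1)) + pn 1 a)"
    and last: "s (k - 1) = sg bb (pn m \<beta>)" unfolding walk_def by (elim exE conjE) (rule that; assumption)
  have "\<forall>i. \<exists>a. 1 \<le> i \<and> i < k \<longrightarrow> a \<in> R \<and> s i = pn 1 (s (i - 1)) + pn 1 a" using st by blast
  from choice[OF this] obtain A where A0: "\<forall>i. 1 \<le> i \<and> i < k \<longrightarrow> A i \<in> R \<and> s i = pn 1 (s (i - 1)) + pn 1 (A i)"
    by blast
  have A: "\<And>i. 1 \<le> i \<Longrightarrow> i < k \<Longrightarrow> A i \<in> R \<and> s i = pn 1 (s (i - 1)) + pn 1 (A i)"
    using A0 by blast
  define al where "al j = (if j = 1 then s 0 else A (j - 1))" for j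
  have cs: "conn_sum phi H0 al i = s i" if "i < k" for i
    using that
  proof (induction i)
    case 0
    have "s 0 \<in> R" using sR k by auto
    thus ?case by (simp add: conn_sum_0 al_def pn0 R_dual)
  next
    case (Suc i)
    have a2: "al (i + 2) = A (Suc i)" by (simp add: al_def)
    have "conn_sum phi H0 al (Suc i) = pn 1 (conn_sum phi H0 al i) + pn 1 (al (i + 2))"
      by (rule conn_sum_Suc)
    also have "\<dots> = pn 1 (s i) + pn 1 (A (Suc i))" using Suc.IH Suc.prems a2 by simp
    also have "\<dots> = s (Suc i)" using A[of "Suc i"] Suc by simp
    finally show ?case .
  qed
  have alR: "\<forall>i\<in>{1..k}. al i \<in> R"
  proof
    fix i assume i: "i \<in> {1..k}"
    show "al i \<in> R"
    proof (cases "i = 1")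
      case True thus ?thesis using sR k by (simp add: al_def)
    next
      case False
      hence "1 \<le> i - 1" "i - 1 < k" using i by auto
      thus ?thesis using A[of "i - 1"] False by (simp add: al_def)
    qed
  qed
  have lastset: "s (k - 1) \<in> {pn m \<beta> | m. True} \<union> {pn m (neg_fun \<beta>) | m. True}"
    using last by (cases bb) (auto simp: sg_def neg_fun_eq pn_uminus)
  show "conn \<alpha> \<beta>"
    unfolding connected_def
  proof (intro exI[of _ k] exI[of _ al] conjI k alR)
    show "if k = 1 then
          al 1 \<in> {pn n \<alpha> | n. True} \<inter> ({pn m \<beta> | m. True} \<union> {pn m (neg_fun \<beta>) | m. True})
        else
          al 1 \<in> {pn n \<alpha> | n. True} \<and>
          (\<forall>i\<in>{1..k-2}. conn_sum phi H0 al i \<in> R) \<and>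
          conn_sum phi H0 al (k - 1) \<in> {pn m \<beta> | m. True} \<union> {pn m (neg_fun \<beta>) | m. True}"
    proof (cases "k = 1")
      case True thus ?thesis using s0 lastset by (auto simp: al_def)
    next
      case False
      have "\<forall>i\<in>{1..k-2}. conn_sum phi H0 al i \<in> R" using cs sR by auto
      moreover have "conn_sum phi H0 al (k - 1) = s (k - 1)" using cs k by auto
      ultimately show ?thesis using False s0 lastset by (auto simp: al_def)
    qed
  qed
qed

lemma walk_sym: assumes "walk \<alpha> \<beta>" shows "walk \<beta> \<alpha>"
proof -
  obtain k :: nat and s :: "nat \<Rightarrow> 'v \<Rightarrow> 'k" and n m bb where k: "k \<ge> 1" and s0: "s 0 = pn n \<alpha>" and sR: "\<forall>i<k. s i \<in> R"
    and st: "\<forall>i. 1 \<le> i \<and> i < k \<longrightarrow> (\<exists>a\<in>R. s i = pn 1 (s (i - 1)) + pn 1 a)"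
    and last: "s (k - 1) = sg bb (pn m \<beta>)" using assms unfolding walk_def by (elim exE conjE) (rule that; assumption)
  define t where "t j = sg bb (pn (2 * j) (s (k - 1 - j)))" for j
  show ?thesis
  proof (rule walkI[of k t m \<beta> bb "n + 2 * (k - 1)" \<alpha>])
    have "pn 0 (s (k - 1)) = s (k - 1)" using sR k by (simp add: pn0 R_dual)
    thus "t 0 = pn m \<beta>" unfolding t_def using last by (simp add: sg_sg sg_def)
  next
    fix j assume "j < k" thus "t j \<in> R" unfolding t_def using sR by (auto intro!: R_sg R_pn)
  next
    fix j assume j: "1 \<le> j" "j < k"
    have ij: "1 \<le> k - j" "k - j < k" using j by auto
    obtain c where c: "c \<in> R" "s (k - j) = pn 1 (s (k - j - 1)) + pn 1 c" using st ij by blast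
    have i1: "k - 1 - (j - 1) = k - j" "k - 1 - j = k - j - 1" using j by auto
    have e2: "2 * j - 2 + 1 = 2 * j - 1" "2 * j - 1 + 1 = 2 * j" using j by auto
    have e3: "2 * (j - 1) + 1 = 2 * j - 1" "Suc (2 * (j - 1)) = 2 * j - 1" using j by auto
    have e4: "1 + (2 * j - 1) = 2 * j" using j by auto
    have e5: "Suc (2 * j - Suc 0) = 2 * j" using j by auto
    have "pn 1 (t (j - 1)) = sg bb (pn 1 (pn (2 * (j - 1)) (s (k - j))))"
      unfolding t_def i1 by (simp only: pn_sg)
    also have "\<dots> = sg bb (pn (2 * j - 1) (s (k - j)))" by (simp only: pn_pn e3(1))
    also have "\<dots> = sg bb (pn (2 * j) (s (k - j - 1)) + pn (2 * j) c)"
      unfolding c(2) pn_add pn_pn e4 ..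
    also have "\<dots> = t j + sg bb (pn (2 * j) c)" unfolding t_def i1 by (simp add: sg_def)
    finally have "t j = pn 1 (t (j - 1)) + pn 1 (- sg bb (pn (2 * j - 1) c))"
      by (simp add: pn_uminus pn_sg pn_pn e2 e5)
    moreover have "- sg bb (pn (2 * j - 1) c) \<in> R" using c by (intro R_neg R_sg R_pn)
    ultimately show "\<exists>a\<in>R. t j = pn 1 (t (j - 1)) + pn 1 a" by blast
  next
    show "t (k - 1) = sg bb (pn (n + 2 * (k - 1)) \<alpha>)" unfolding t_def using k s0 by (simp add: pn_pn)
  qed (use k in auto)
qed

lemma walk_trans: assumes w1: "walk \<alpha> \<beta>" and w2: "walk \<beta> \<gamma>" shows "walk \<alpha> \<gamma>"
proof -
  obtain k :: nat and s :: "nat \<Rightarrow> 'v \<Rightarrow> 'k" and n m b where k: "k \<ge> 1" and s0: "s 0 = pn n \<alpha>"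
    and sR: "\<forall>i<k. s i \<in> R"
    and st: "\<forall>i. 1 \<le> i \<and> i < k \<longrightarrow> (\<exists>a\<in>R. s i = pn 1 (s (i - 1)) + pn 1 a)"
    and last: "s (k - 1) = sg b (pn m \<beta>)"
    using w1 unfolding walk_def by (elim exE conjE) (rule that; assumption)
  obtain p :: nat and t :: "nat \<Rightarrow> 'v \<Rightarrow> 'k" and n' m' b' where p: "p \<ge> 1" and t0: "t 0 = pn n' \<beta>"
    and tR: "\<forall>i<p. t i \<in> R"
    and tt: "\<forall>i. 1 \<le> i \<and> i < p \<longrightarrow> (\<exists>a\<in>R. t i = pn 1 (t (i - 1)) + pn 1 a)"
    and lastt: "t (p - 1) = sg b' (pn m' \<gamma>)"
    using w2 unfolding walk_def by (elim exE conjE) (rule that; assumption)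
  define u where "u i = (if i < k then pn n' (s i) else sg b (pn m (t (i - (k - 1)))))" for i
  have hi: "u i = sg b (pn m (t (i - (k - 1))))" if "k - 1 \<le> i" for i
  proof (cases "i < k")
    case True
    hence ik: "i = k - 1" using that by auto
    hence "u i = pn n' (s (k - 1))" using True by (simp add: u_def)
    also have "\<dots> = sg b (pn (m + n') \<beta>)" unfolding last by (simp add: pn_sg pn_pn)
    also have "\<dots> = sg b (pn m (t (i - (k - 1))))" using ik by (simp add: t0 pn_pn add.commute)
    finally show ?thesis .
  next
    case False thus ?thesis by (simp add: u_def)
  qed
  show ?thesis
  proof (rule walkI[of "k + p - 1" u "n + n'" \<alpha> "b = b'" "m' + m" \<gamma>])
    show "1 \<le> k + p - 1" using k p by simp
    show "u 0 = pn (n + n') \<alpha>" using k by (simp add: u_def s0 pn_pn)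
  next
    fix i assume i: "i < k + p - 1"
    show "u i \<in> R"
    proof (cases "i < k")
      case True thus ?thesis using sR by (simp add: u_def R_pn)
    next
      case False hence "i - (k - 1) < p" using i by auto
      thus ?thesis using False tR by (simp add: u_def R_pn R_sg)
    qed
  next
    fix i assume i: "1 \<le> i" "i < k + p - 1"
    show "\<exists>a\<in>R. u i = pn 1 (u (i - 1)) + pn 1 a"
    proof (cases "i < k")
      case True
      obtain a where a: "a \<in> R" "s i = pn 1 (s (i - 1)) + pn 1 a" using st i True by blast
      have "i - 1 < k" using True by simp
      hence "u i = pn 1 (u (i - 1)) + pn 1 (pn n' a)"
        using True a by (simp add: u_def pn_add pn_pn add.commute)
      thus ?thesis using a R_pn by blast
    next
      case False
      define j where "j = i - (k - 1)"
      have j: "1 \<le> j" "j < p" "i - 1 - (k - 1) = j - 1" "k - 1 \<le> i - 1" using False i k unfolding j_def by auto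
      obtain a where a: "a \<in> R" "t j = pn 1 (t (j - 1)) + pn 1 a" using tt j by blast
      have ui: "u i = sg b (pn m (t j))" using hi[of i] False unfolding j_def by simp
      have ui1: "u (i - 1) = sg b (pn m (t (j - 1)))" using hi[OF j(4)] j(3) by simp
      have "u i = pn 1 (u (i - 1)) + pn 1 (sg b (pn m a))"
        unfolding ui ui1 a(2) by (simp add: pn_add pn_pn pn_sg sg_def pn_uminus add.commute)
      thus ?thesis using a R_pn R_sg by blast
    qed
  next
    have e: "k + p - 1 - 1 - (k - 1) = p - 1" "k - 1 \<le> k + p - 1 - 1" using k p by auto
    have "u (k + p - 1 - 1) = sg b (pn m (t (p - 1)))" using hi[OF e(2)] e(1) by simp
    hence "u (k + p - 1 - 1) = sg b (pn m (sg b' (pn m' \<gamma>)))" unfolding lastt .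
    thus "u (k + p - 1 - 1) = sg (b = b') (pn (m' + m) \<gamma>)" by (simp add: pn_sg pn_pn sg_sg)
  qed
qed

lemma conn_sym: assumes a: "\<alpha> \<in> R" and b: "\<beta> \<in> R" and c: "conn \<alpha> \<beta>" shows "conn \<beta> \<alpha>"
proof -
  have "walk \<alpha> \<beta>" using c conn_walk[OF a b] by simp
  hence "walk \<beta> \<alpha>" by (rule walk_sym)
  thus ?thesis using conn_walk[OF b a] by simp
qed
lemma conn_trans: assumes a: "\<alpha> \<in> R" and b: "\<beta> \<in> R" and c: "\<gamma> \<in> R"
  and ab: "conn \<alpha> \<beta>" and bc: "conn \<beta> \<gamma>" shows "conn \<alpha> \<gamma>"
proof -
  have "walk \<alpha> \<beta>" using ab conn_walk[OF a b] by simp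
  moreover have "walk \<beta> \<gamma>" using bc conn_walk[OF b c] by simp
  ultimately have "walk \<alpha> \<gamma>" by (rule walk_trans)
  thus ?thesis using conn_walk[OF a c] by simp
qed

lemma walk_k1: "s0 \<in> R \<Longrightarrow> s0 = pn n \<alpha> \<Longrightarrow> s0 = sg b (pn m \<beta>) \<Longrightarrow> walk \<alpha> \<beta>"
  by (rule walkI[of 1 "\<lambda>_. s0" n \<alpha> b m \<beta>]) auto

lemma conn_refl: assumes a: "\<alpha> \<in> R" shows "conn \<alpha> \<alpha>"
proof -
  have "pn 0 \<alpha> = \<alpha>" using a by (simp add: pn0 R_dual)
  hence "walk \<alpha> \<alpha>" using a by (intro walk_k1[of \<alpha> 0 \<alpha> True 0]) (simp_all add: sg_def)
  thus ?thesis using conn_walk[OF a a] by simp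
qed

lemma conn_pn: assumes a: "\<alpha> \<in> R" shows "conn \<alpha> (pn n \<alpha>)"
proof -
  have "pn 0 (pn n \<alpha>) = pn n \<alpha>" by (simp add: pn_pn)
  hence "walk \<alpha> (pn n \<alpha>)" using a R_pn by (intro walk_k1[of "pn n \<alpha>" n \<alpha> True 0]) (simp_all add: sg_def)
  thus ?thesis using conn_walk[OF a R_pn[OF a]] by simp
qed

lemma conn_neg: assumes a: "\<alpha> \<in> R" shows "conn \<alpha> (- \<alpha>)"
proof -
  have "pn 0 \<alpha> = \<alpha>" using a by (simp add: pn0 R_dual)
  hence "walk \<alpha> (- \<alpha>)" using a by (intro walk_k1[of \<alpha> 0 \<alpha> False 0]) (simp_all add: sg_def pn_uminus)
  thus ?thesis using conn_walk[OF a R_neg[OF a]] by simp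
qed

lemma conn_pp: assumes a: "\<alpha> \<in> R" shows "conn (pp \<alpha>) \<alpha>"
proof -
  have "pn 0 \<alpha> = \<alpha>" "pn 1 (pp \<alpha>) = \<alpha>" using a pn1_pp[OF R_dual[OF a]] by (simp_all add: pn0 R_dual)
  hence "walk (pp \<alpha>) \<alpha>" using a by (intro walk_k1[of \<alpha> 1 "pp \<alpha>" True 0]) (simp_all add: sg_def)
  thus ?thesis using conn_walk[OF R_pp[OF a] a] by simp
qed

lemma conn_two: assumes b: "\<beta> \<in> R" and c: "\<gamma> \<in> R" and s: "pn 1 (\<beta> + \<gamma>) \<in> R"
  shows "conn \<beta> (pn 1 (\<beta> + \<gamma>))"
proof -
  have "walk \<beta> (pn 1 (\<beta> + \<gamma>))"
  proof (rule walkI[of 2 "\<lambda>i. if i = 0 then \<beta> else pn 1 (\<beta> + \<gamma>)" 0 \<beta> True 0])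
    show "(if (0::nat) = 0 then \<beta> else pn 1 (\<beta> + \<gamma>)) = pn 0 \<beta>" using b by (simp add: pn0 R_dual)
  next
    fix i :: nat assume "i < 2" thus "(if i = 0 then \<beta> else pn 1 (\<beta> + \<gamma>)) \<in> R" using b s by auto
  next
    fix i :: nat assume "1 \<le> i" "i < 2"
    hence "i = 1" by auto
    thus "\<exists>a\<in>R. (if i = 0 then \<beta> else pn 1 (\<beta> + \<gamma>)) =
        pn 1 (if i - 1 = 0 then \<beta> else pn 1 (\<beta> + \<gamma>)) + pn 1 a"
      using c by (auto simp: pn_add)
  next
    show "(if 2 - 1 = (0::nat) then \<beta> else pn 1 (\<beta> + \<gamma>)) = sg True (pn 0 (pn 1 (\<beta> + \<gamma>)))"
      by (simp add: sg_def pn_pn)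
  qed simp
  thus ?thesis using conn_walk[OF b s] by simp
qed

lemma M':
  assumes b: "\<beta> \<in> R" and c: "\<gamma> \<in> R" and x: "x \<in> Lr \<beta>" and y: "y \<in> Lr \<gamma>"
    and nz: "br x y \<noteq> 0" and ne: "\<beta> + \<gamma> \<noteq> 0"
  shows "pn 1 (\<beta> + \<gamma>) \<in> R \<and> conn \<beta> (pn 1 (\<beta> + \<gamma>))"
proof -
  have l: "br x y \<in> Lr (pn 1 (\<beta> + \<gamma>))" using E1 x y .
  have d: "\<beta> + \<gamma> \<in> dual" using b c R_dual dual_plus by blast
  have sR: "pn 1 (\<beta> + \<gamma>) \<in> R" unfolding R_iff using l nz pn_dual[OF d] pn_nz[OF d ne] by blast
  thus ?thesis using conn_two[OF b c sR] by blast
qed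

lemma M:
  assumes b: "\<beta> \<in> R" and c: "\<gamma> \<in> R" and x: "x \<in> Lr \<beta>" and y: "y \<in> Lr \<gamma>" and nz: "br x y \<noteq> 0"
  shows "conn \<beta> \<gamma>"
proof (cases "\<beta> + \<gamma> = 0")
  case True
  hence "\<gamma> = - \<beta>" using minus_unique[OF True] by simp
  thus ?thesis using conn_neg b by simp
next
  case False
  let ?s = "pn 1 (\<beta> + \<gamma>)"
  have s: "?s \<in> R" "conn \<beta> ?s" using M'[OF b c x y nz False] by blast+
  have "?s = pn 1 (\<gamma> + \<beta>)" by (simp add: add.commute)
  hence "conn \<gamma> ?s" using conn_two[OF c b] s(1) by simp
  hence "conn ?s \<gamma>" by (rule conn_sym[OF c s(1)])
  thus ?thesis by (rule conn_trans[OF b s(1) c s(2)])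
qed

abbreviation cls :: "('v \<Rightarrow> 'k) \<Rightarrow> ('v \<Rightarrow> 'k) set" where "cls \<alpha> \<equiv> root_class scale br phi H0 \<alpha>"
definition GH :: "('v \<Rightarrow> 'k) set \<Rightarrow> 'v set" where
  "GH S = {br x y | x y \<beta>. \<beta> \<in> S \<and> x \<in> Lr \<beta> \<and> y \<in> Lr (neg_fun \<beta>)}"
definition VU :: "('v \<Rightarrow> 'k) set \<Rightarrow> 'v set" where "VU S = (\<Union>\<beta>\<in>S. Lr \<beta>)"
abbreviation II :: "('v \<Rightarrow> 'k) \<Rightarrow> 'v set" where "II \<alpha> \<equiv> L_part scale br phi H0 (cls \<alpha>)"

lemma L_part_eq: "L_part scale br phi H0 S = span (GH S \<union> VU S)"
proof -
  have hp: "H_part scale br phi H0 S = span (GH S)" unfolding H_part_def GH_def ..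
  have vp: "V_part scale br phi H0 S = span (VU S)" unfolding V_part_def VU_def ..
  show ?thesis unfolding L_part_def hp vp
  proof (rule antisym)
    have "span (GH S) \<union> span (VU S) \<subseteq> span (GH S \<union> VU S)"
      using span_mono[of "GH S" "GH S \<union> VU S"] span_mono[of "VU S" "GH S \<union> VU S"] by auto
    thus "span (span (GH S) \<union> span (VU S)) \<subseteq> span (GH S \<union> VU S)"
      by (rule span_minimal) simp
    have "GH S \<union> VU S \<subseteq> span (GH S) \<union> span (VU S)" using span_superset by blast
    thus "span (GH S \<union> VU S) \<subseteq> span (span (GH S) \<union> span (VU S))" by (rule span_mono)
  qed
qed

lemma cls_iff: "\<beta> \<in> cls \<alpha> \<longleftrightarrow> \<beta> \<in> R \<and> conn \<beta> \<alpha>" by (simp add: root_class_def)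

lemma II_sub: "subspace (II \<alpha>)" by (simp add: L_part_eq)

lemma GH_I: "\<beta> \<in> cls \<alpha> \<Longrightarrow> x \<in> Lr \<beta> \<Longrightarrow> y \<in> Lr (- \<beta>) \<Longrightarrow> br x y \<in> II \<alpha>"
  unfolding L_part_eq by (rule span_base) (auto simp: GH_def neg_fun_eq)

lemma VU_I: "\<beta> \<in> cls \<alpha> \<Longrightarrow> v \<in> Lr \<beta> \<Longrightarrow> v \<in> II \<alpha>"
  unfolding L_part_eq by (rule span_base) (auto simp: VU_def)

lemma GH_H: assumes "S \<subseteq> R" shows "GH S \<subseteq> H"
proof -
  have "GH S \<subseteq> GH R" using assms unfolding GH_def by blast
  also have "\<dots> \<subseteq> H_part scale br phi H0 R" unfolding H_part_def GH_def by (rule span_superset)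
  also have "\<dots> \<subseteq> span (U \<union> H_part scale br phi H0 R)" using span_superset[of "U \<union> H_part scale br phi H0 R"] by blast
  also have "\<dots> = H" by (rule U_compl)
  finally show ?thesis .
qed

lemma cls_R: "cls \<alpha> \<subseteq> R" by (auto simp: cls_iff)

lemma cls_conn: assumes a: "\<alpha> \<in> R" and b: "\<beta> \<in> cls \<alpha>" and c: "\<gamma> \<in> R" and bc: "conn \<beta> \<gamma>"
  shows "\<gamma> \<in> cls \<alpha>"
proof -
  have bR: "\<beta> \<in> R" "conn \<beta> \<alpha>" using b by (auto simp: cls_iff)
  have "conn \<gamma> \<beta>" by (rule conn_sym[OF bR(1) c bc])
  hence "conn \<gamma> \<alpha>" by (rule conn_trans[OF c bR(1) a _ bR(2)])
  thus ?thesis using c by (simp add: cls_iff)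
qed

lemma ER:
  assumes b: "\<beta> \<in> R" and c: "\<gamma> \<in> R" and nc: "\<not> conn \<beta> \<gamma>"
    and x: "x \<in> Lr \<beta>" and x': "x' \<in> Lr (- \<beta>)" and w: "w \<in> Lr \<gamma>"
  shows "br (br x x') w = 0 \<and> br w (br x x') = 0"
proof -
  let ?d = "pp \<gamma>"
  have dR: "?d \<in> R" using R_pp[OF c] .
  have dc: "conn ?d \<gamma>" using conn_pp[OF c] .
  have z: "inv phi w \<in> Lr ?d" using Lr_pp[OF w] .
  have nbR: "- \<beta> \<in> R" using R_neg[OF b] .
  have c1: "\<forall>x'\<in>Lr (- \<beta>). \<forall>z\<in>Lr ?d. br x' z = 0"
  proof (intro ballI, rule ccontr)
    fix x' z assume h: "x' \<in> Lr (- \<beta>)" "z \<in> Lr ?d" "br x' z \<noteq> 0"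
    have "conn (- \<beta>) ?d" by (rule M[OF nbR dR h])
    hence "conn \<beta> ?d" by (rule conn_trans[OF b nbR dR conn_neg[OF b]])
    hence "conn \<beta> \<gamma>" by (rule conn_trans[OF b dR c _ dc])
    thus False using nc by blast
  qed
  have c2: "\<forall>z\<in>Lr ?d. \<forall>x\<in>Lr \<beta>. br z x = 0"
  proof (intro ballI, rule ccontr)
    fix z x assume h: "z \<in> Lr ?d" "x \<in> Lr \<beta>" "br z x \<noteq> 0"
    have "conn ?d \<beta>" by (rule M[OF dR b h])
    hence "conn \<beta> ?d" by (rule conn_sym[OF dR b])
    hence "conn \<beta> \<gamma>" by (rule conn_trans[OF b dR c _ dc])
    thus False using nc by blast
  qed
  show ?thesis using E3[OF c1 c2 x x' z] by simp
qed

lemma split_span: "span (H \<union> VU R) = UNIV"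
proof -
  have "span (\<Union>i\<in>insert None (Some ` R). case i of None \<Rightarrow> H | Some \<alpha> \<Rightarrow> Lr \<alpha>) = UNIV"
    using split unfolding split_alg_def internal_direct_sum_def by blast
  moreover have "(\<Union>i\<in>insert None (Some ` R). case i of None \<Rightarrow> H | Some \<alpha> \<Rightarrow> Lr \<alpha>) = H \<union> VU R"
    unfolding VU_def by auto
  ultimately show ?thesis by simp
qed

lemma ideal_br: assumes a: "\<alpha> \<in> R" and x: "x \<in> II \<alpha>" shows "br x y \<in> II \<alpha>"
proof -
  have y: "y \<in> span (H \<union> VU R)" using split_span by simp
  have gen: "br p q \<in> II \<alpha>" if p: "p \<in> GH (cls \<alpha>) \<union> VU (cls \<alpha>)" and q: "q \<in> H \<union> VU R" for p q
  proof -
    from p show ?thesis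
    proof
      assume "p \<in> GH (cls \<alpha>)"
      then obtain u v \<beta> where p: "p = br u v" "\<beta> \<in> cls \<alpha>" "u \<in> Lr \<beta>" "v \<in> Lr (- \<beta>)"
        unfolding GH_def neg_fun_eq by blast
      have bR: "\<beta> \<in> R" using p cls_R by blast
      have pH: "p \<in> H" using GH_H[OF cls_R] \<open>p \<in> GH (cls \<alpha>)\<close> by blast
      from q show ?thesis
      proof
        assume "q \<in> H" thus ?thesis using H_ab[OF pH] subspace_0[OF II_sub] by simp
      next
        assume "q \<in> VU R"
        then obtain \<gamma> where g: "\<gamma> \<in> R" "q \<in> Lr \<gamma>" unfolding VU_def by blast
        show ?thesis
        proof (cases "conn \<beta> \<gamma>")
          case True
          hence gc: "\<gamma> \<in> cls \<alpha>" by (rule cls_conn[OF a p(2) g(1)])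
          have "pn 1 \<gamma> \<in> cls \<alpha>" by (rule cls_conn[OF a gc R_pn[OF g(1)] conn_pn[OF g(1)]])
          moreover have "br p q \<in> Lr (pn 1 \<gamma>)" using E2b[OF pH g(2)] .
          ultimately show ?thesis by (rule VU_I)
        next
          case False
          hence "br p q = 0" using ER[OF bR g(1) False p(3) p(4) g(2)] p by simp
          thus ?thesis using subspace_0[OF II_sub] by simp
        qed
      qed
    next
      assume "p \<in> VU (cls \<alpha>)"
      then obtain \<beta> where b: "\<beta> \<in> cls \<alpha>" "p \<in> Lr \<beta>" unfolding VU_def by blast
      have bR: "\<beta> \<in> R" using b cls_R by blast
      from q show ?thesis
      proof
        assume "q \<in> H"
        hence "br p q \<in> Lr (pn 1 \<beta>)" using E2a b by blast
        moreover have "pn 1 \<beta> \<in> cls \<alpha>" by (rule cls_conn[OF a b(1) R_pn[OF bR] conn_pn[OF bR]])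
        ultimately show ?thesis using VU_I by blast
      next
        assume "q \<in> VU R"
        then obtain \<gamma> where g: "\<gamma> \<in> R" "q \<in> Lr \<gamma>" unfolding VU_def by blast
        show ?thesis
        proof (cases "br p q = 0")
          case True thus ?thesis using subspace_0[OF II_sub] by simp
        next
          case nz: False
          show ?thesis
          proof (cases "\<beta> + \<gamma> = 0")
            case True
            hence "\<gamma> = - \<beta>" using minus_unique[OF True] by simp
            thus ?thesis using GH_I b g by simp
          next
            case False
            have m: "pn 1 (\<beta> + \<gamma>) \<in> R" "conn \<beta> (pn 1 (\<beta> + \<gamma>))" using M'[OF bR g(1) b(2) g(2) nz False] by blast+
            hence "pn 1 (\<beta> + \<gamma>) \<in> cls \<alpha>" using cls_conn[OF a b(1)] by blast
            thus ?thesis using VU_I E1[OF b(2) g(2)] by blast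
          qed
        qed
      qed
    qed
  qed
  show ?thesis using span_bil[OF II_sub gen] x y unfolding L_part_eq by blast
qed

lemma ideal_phi: assumes a: "\<alpha> \<in> R" shows "phi ` II \<alpha> = II \<alpha>"
proof -
  let ?G = "GH (cls \<alpha>) \<union> VU (cls \<alpha>)"
  have phiG: "phi p \<in> II \<alpha>" "inv phi p \<in> II \<alpha>" if p: "p \<in> ?G" for p
  proof -
    from p have "phi p \<in> II \<alpha> \<and> inv phi p \<in> II \<alpha>"
    proof
      assume "p \<in> GH (cls \<alpha>)"
      then obtain u v \<beta> where p: "p = br u v" "\<beta> \<in> cls \<alpha>" "u \<in> Lr \<beta>" "v \<in> Lr (- \<beta>)"
        unfolding GH_def neg_fun_eq by blast
      have bR: "\<beta> \<in> R" using p cls_R by blast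
      have c1: "pn 1 \<beta> \<in> cls \<alpha>" by (rule cls_conn[OF a p(2) R_pn[OF bR] conn_pn[OF bR]])
      have c2: "pp \<beta> \<in> cls \<alpha>"
      proof -
        have "conn \<beta> (pp \<beta>)" using conn_sym[OF R_pp[OF bR] bR conn_pp[OF bR]] .
        thus ?thesis by (rule cls_conn[OF a p(2) R_pp[OF bR]])
      qed
      have "phi p = br (phi u) (phi v)" using p by (simp add: phibr)
      moreover have "phi v \<in> Lr (- pn 1 \<beta>)" using Lr_pn1[OF p(4)] by (simp add: pn_uminus)
      ultimately have 1: "phi p \<in> II \<alpha>" using GH_I[OF c1 Lr_pn1[OF p(3)]] by simp
      have "phi (br (inv phi u) (inv phi v)) = p" using p by (simp add: phibr)
      hence "inv phi p = br (inv phi u) (inv phi v)" by (metis inv_phi)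
      moreover have "inv phi v \<in> Lr (- pp \<beta>)" using Lr_pp[OF p(4)] by (simp add: pp_uminus)
      ultimately have 2: "inv phi p \<in> II \<alpha>" using GH_I[OF c2 Lr_pp[OF p(3)]] by simp
      show ?thesis using 1 2 by blast
    next
      assume "p \<in> VU (cls \<alpha>)"
      then obtain \<beta> where b: "\<beta> \<in> cls \<alpha>" "p \<in> Lr \<beta>" unfolding VU_def by blast
      have bR: "\<beta> \<in> R" using b cls_R by blast
      have c1: "pn 1 \<beta> \<in> cls \<alpha>" by (rule cls_conn[OF a b(1) R_pn[OF bR] conn_pn[OF bR]])
      have c2: "pp \<beta> \<in> cls \<alpha>"
      proof -
        have "conn \<beta> (pp \<beta>)" using conn_sym[OF R_pp[OF bR] bR conn_pp[OF bR]] .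
        thus ?thesis by (rule cls_conn[OF a b(1) R_pp[OF bR]])
      qed
      show ?thesis using VU_I[OF c1 Lr_pn1[OF b(2)]] VU_I[OF c2 Lr_pp[OF b(2)]] by blast
    qed
    thus "phi p \<in> II \<alpha>" "inv phi p \<in> II \<alpha>" by blast+
  qed
  have s1: "subspace {v. phi v \<in> II \<alpha>}"
    by (rule subspaceI) (auto simp: phi_add phi_scale intro: subspace_0[OF II_sub] subspace_add[OF II_sub] subspace_scale[OF II_sub])
  have s2: "subspace {v. inv phi v \<in> II \<alpha>}"
    by (rule subspaceI) (auto simp: inv_add inv_scale intro: subspace_0[OF II_sub] subspace_add[OF II_sub] subspace_scale[OF II_sub])
  have "span ?G \<subseteq> {v. phi v \<in> II \<alpha>}" using phiG by (intro span_minimal s1) blast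
  hence A: "v \<in> II \<alpha> \<Longrightarrow> phi v \<in> II \<alpha>" for v unfolding L_part_eq by blast
  have "span ?G \<subseteq> {v. inv phi v \<in> II \<alpha>}" using phiG by (intro span_minimal s2) blast
  hence B: "v \<in> II \<alpha> \<Longrightarrow> inv phi v \<in> II \<alpha>" for v unfolding L_part_eq by blast
  show ?thesis
  proof
    show "phi ` II \<alpha> \<subseteq> II \<alpha>" using A by blast
    show "II \<alpha> \<subseteq> phi ` II \<alpha>"
    proof
      fix v assume "v \<in> II \<alpha>"
      hence "inv phi v \<in> II \<alpha>" by (rule B)
      moreover have "v = phi (inv phi v)" by simp
      ultimately show "v \<in> phi ` II \<alpha>" by blast
    qed
  qed
qed

lemma ideal_graded: assumes a: "\<alpha> \<in> R" shows "graded_subspace scale Lg (II \<alpha>)"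
  unfolding graded_subspace_def
proof (intro conjI II_sub antisym)
  let ?Gr = "span (\<Union>g. II \<alpha> \<inter> Lg g)"
  show "?Gr \<subseteq> II \<alpha>" by (rule span_minimal[OF _ II_sub]) blast
  have grsub: "subspace ?Gr" by simp
  have "GH (cls \<alpha>) \<union> VU (cls \<alpha>) \<subseteq> ?Gr"
  proof
    fix p assume "p \<in> GH (cls \<alpha>) \<union> VU (cls \<alpha>)"
    thus "p \<in> ?Gr"
    proof
      assume "p \<in> GH (cls \<alpha>)"
      then obtain u v \<beta> where p: "p = br u v" "\<beta> \<in> cls \<alpha>" "u \<in> Lr \<beta>" "v \<in> Lr (- \<beta>)"
        unfolding GH_def neg_fun_eq by blast
      have "br u v \<in> ?Gr"
      proof (rule bil_ext[OF hdec_Lr hdec_Lr grsub _ p(3) p(4)])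
        fix a b u' v' assume "u' \<in> Lr \<beta>" "u' \<in> Lg a" "v' \<in> Lr (- \<beta>)" "v' \<in> Lg b"
        hence "br u' v' \<in> II \<alpha> \<inter> Lg (a + b)" using GH_I[OF p(2)] grade by blast
        thus "br u' v' \<in> ?Gr" by (intro span_base) blast
      qed
      thus ?thesis using p by simp
    next
      assume "p \<in> VU (cls \<alpha>)"
      then obtain \<beta> where b: "\<beta> \<in> cls \<alpha>" "p \<in> Lr \<beta>" unfolding VU_def by blast
      obtain F c where F: "finite F" "p = sum c F" "\<forall>g\<in>F. c g \<in> Lr \<beta> \<and> c g \<in> Lg g"
        using hdec_Lr b(2) unfolding hdec_def by blast
      have "\<forall>g\<in>F. c g \<in> ?Gr" using F VU_I[OF b(1)] by (blast intro: span_base)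
      hence "sum c F \<in> ?Gr" by (intro subspace_sum[OF grsub]) blast
      thus ?thesis using F(2) by simp
    qed
  qed
  hence "span (GH (cls \<alpha>) \<union> VU (cls \<alpha>)) \<subseteq> ?Gr" by (rule span_minimal) simp
  thus "II \<alpha> \<subseteq> ?Gr" unfolding L_part_eq .
qed

lemma ideal_II: assumes a: "\<alpha> \<in> R" shows "ideal scale Lg br phi (II \<alpha>)"
  unfolding ideal_def using ideal_graded[OF a] ideal_br[OF a] ideal_phi[OF a] by blast

lemma II_eq: assumes a: "\<alpha> \<in> R" and b: "\<beta> \<in> R" and c: "conn \<alpha> \<beta>" shows "II \<alpha> = II \<beta>"
proof -
  have c': "conn \<beta> \<alpha>" by (rule conn_sym[OF a b c])
  have "cls \<alpha> = cls \<beta>"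
  proof (rule set_eqI)
    fix \<gamma> show "\<gamma> \<in> cls \<alpha> \<longleftrightarrow> \<gamma> \<in> cls \<beta>"
    proof
      assume "\<gamma> \<in> cls \<alpha>"
      hence g: "\<gamma> \<in> R" "conn \<gamma> \<alpha>" by (simp_all add: cls_iff)
      have "conn \<gamma> \<beta>" by (rule conn_trans[OF g(1) a b g(2) c])
      thus "\<gamma> \<in> cls \<beta>" using g by (simp add: cls_iff)
    next
      assume "\<gamma> \<in> cls \<beta>"
      hence g: "\<gamma> \<in> R" "conn \<gamma> \<beta>" by (simp_all add: cls_iff)
      have "conn \<gamma> \<alpha>" by (rule conn_trans[OF g(1) b a g(2) c'])
      thus "\<gamma> \<in> cls \<alpha>" using g by (simp add: cls_iff)
    qed
  qed
  thus ?thesis by simp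
qed

lemma II_span: "span (U \<union> (\<Union>\<alpha>\<in>R. II \<alpha>)) = UNIV"
proof -
  let ?S = "span (U \<union> (\<Union>\<alpha>\<in>R. II \<alpha>))"
  have "GH R \<subseteq> ?S"
  proof
    fix p assume "p \<in> GH R"
    then obtain u v \<beta> where p: "p = br u v" "\<beta> \<in> R" "u \<in> Lr \<beta>" "v \<in> Lr (- \<beta>)"
      unfolding GH_def neg_fun_eq by blast
    have "\<beta> \<in> cls \<beta>" using p conn_refl by (simp add: cls_iff)
    hence "p \<in> II \<beta>" using GH_I p by blast
    thus "p \<in> ?S" using p by (blast intro: span_base)
  qed
  hence "H_part scale br phi H0 R \<subseteq> ?S" unfolding H_part_def GH_def by (rule span_minimal) simp
  moreover have "U \<subseteq> ?S" by (blast intro: span_base)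
  ultimately have "span (U \<union> H_part scale br phi H0 R) \<subseteq> ?S" by (intro span_minimal) simp_all
  hence HS: "H \<subseteq> ?S" using U_compl by simp
  have "VU R \<subseteq> ?S"
  proof
    fix p assume "p \<in> VU R"
    then obtain \<beta> where b: "\<beta> \<in> R" "p \<in> Lr \<beta>" unfolding VU_def by blast
    have "\<beta> \<in> cls \<beta>" using b conn_refl by (simp add: cls_iff)
    hence "p \<in> II \<beta>" using VU_I b by blast
    thus "p \<in> ?S" using b by (blast intro: span_base)
  qed
  hence "span (H \<union> VU R) \<subseteq> ?S" using HS by (intro span_minimal) simp_all
  thus ?thesis using split_span by auto
qed

lemma II_orth: assumes a: "\<alpha> \<in> R" and b: "\<beta> \<in> R" and nc: "\<not> conn \<alpha> \<beta>"
  and x: "x \<in> II \<alpha>" and y: "y \<in> II \<beta>" shows "br x y = 0"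
proof -
  have gen: "br p q \<in> {0}" if p: "p \<in> GH (cls \<alpha>) \<union> VU (cls \<alpha>)" and q: "q \<in> GH (cls \<beta>) \<union> VU (cls \<beta>)" for p q
  proof -
    have ncl: "\<not> conn \<gamma> \<delta>" if g: "\<gamma> \<in> cls \<alpha>" and d: "\<delta> \<in> cls \<beta>" for \<gamma> \<delta>
    proof
      assume gd: "conn \<gamma> \<delta>"
      have gR: "\<gamma> \<in> R" "conn \<gamma> \<alpha>" and dR: "\<delta> \<in> R" "conn \<delta> \<beta>" using g d by (auto simp: cls_iff)
      have "conn \<alpha> \<gamma>" using conn_sym a gR by blast
      hence "conn \<alpha> \<delta>" using conn_trans a gR dR gd by blast
      hence "conn \<alpha> \<beta>" using conn_trans a dR b by blast
      thus False using nc by blast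
    qed
    from p show ?thesis
    proof
      assume pg: "p \<in> GH (cls \<alpha>)"
      then obtain u v \<gamma> where p: "p = br u v" "\<gamma> \<in> cls \<alpha>" "u \<in> Lr \<gamma>" "v \<in> Lr (- \<gamma>)"
        unfolding GH_def neg_fun_eq by blast
      have gR: "\<gamma> \<in> R" using p cls_R by blast
      have pH: "p \<in> H" using GH_H[OF cls_R] pg by blast
      from q show ?thesis
      proof
        assume "q \<in> GH (cls \<beta>)"
        hence "q \<in> H" using GH_H[OF cls_R] by blast
        thus ?thesis using H_ab[OF pH] by simp
      next
        assume "q \<in> VU (cls \<beta>)"
        then obtain \<delta> where d: "\<delta> \<in> cls \<beta>" "q \<in> Lr \<delta>" unfolding VU_def by blast
        have dR: "\<delta> \<in> R" using d cls_R by blast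
        show ?thesis using ER[OF gR dR ncl[OF p(2) d(1)] p(3) p(4) d(2)] p by simp
      qed
    next
      assume "p \<in> VU (cls \<alpha>)"
      then obtain \<gamma> where g: "\<gamma> \<in> cls \<alpha>" "p \<in> Lr \<gamma>" unfolding VU_def by blast
      have gR: "\<gamma> \<in> R" using g cls_R by blast
      from q show ?thesis
      proof
        assume "q \<in> GH (cls \<beta>)"
        then obtain u v \<delta> where q: "q = br u v" "\<delta> \<in> cls \<beta>" "u \<in> Lr \<delta>" "v \<in> Lr (- \<delta>)"
          unfolding GH_def neg_fun_eq by blast
        have dR: "\<delta> \<in> R" using q cls_R by blast
        have "\<not> conn \<delta> \<gamma>" using ncl[OF g(1) q(2)] conn_sym gR dR by blast
        thus ?thesis using ER[OF dR gR _ q(3) q(4) g(2)] q by simp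
      next
        assume "q \<in> VU (cls \<beta>)"
        then obtain \<delta> where d: "\<delta> \<in> cls \<beta>" "q \<in> Lr \<delta>" unfolding VU_def by blast
        have dR: "\<delta> \<in> R" using d cls_R by blast
        show ?thesis using M[OF gR dR g(2) d(2)] ncl[OF g(1) d(1)] by blast
      qed
    qed
  qed
  show ?thesis using span_bil[OF subspace_single_0 gen] x y unfolding L_part_eq by blast
qed

lemma main:
  "(\<forall>\<alpha>\<in>R. ideal scale Lg br phi (II \<alpha>))
   \<and> (\<forall>\<alpha>\<in>R. \<forall>\<beta>\<in>R. conn \<alpha> \<beta> \<longrightarrow> II \<alpha> = II \<beta>)
   \<and> span (U \<union> (\<Union>\<alpha>\<in>R. II \<alpha>)) = UNIV
   \<and> (\<forall>\<alpha>\<in>R. \<forall>\<beta>\<in>R. \<not> conn \<alpha> \<beta> \<longrightarrow> (\<forall>x\<in>II \<alpha>. \<forall>y\<in>II \<beta>. br x y = 0))"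
proof (intro conjI)
  show "\<forall>\<alpha>\<in>R. ideal scale Lg br phi (II \<alpha>)" using ideal_II by blast
  show "\<forall>\<alpha>\<in>R. \<forall>\<beta>\<in>R. conn \<alpha> \<beta> \<longrightarrow> II \<alpha> = II \<beta>" using II_eq by blast
  show "span (U \<union> (\<Union>\<alpha>\<in>R. II \<alpha>)) = UNIV" by (rule II_span)
  show "\<forall>\<alpha>\<in>R. \<forall>\<beta>\<in>R. \<not> conn \<alpha> \<beta> \<longrightarrow> (\<forall>x\<in>II \<alpha>. \<forall>y\<in>II \<beta>. br x y = 0)"
    using II_orth by blast
qed

end

theorem mainTheorem10:
  fixes scale :: "'k::field \<Rightarrow> 'v::ab_group_add \<Rightarrow> 'v"
    and eps :: "'g::ab_group_add \<Rightarrow> 'g \<Rightarrow> 'k"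
    and Lg :: "'g \<Rightarrow> 'v set"
    and br :: "'v \<Rightarrow> 'v \<Rightarrow> 'v"
    and phi :: "'v \<Rightarrow> 'v"
    and H U :: "'v set"
  defines "H0 \<equiv> H \<inter> Lg 0"
  defines "\<Lambda> \<equiv> roots scale br phi H0"
  defines "I \<equiv> (\<lambda>\<alpha>. L_part scale br phi H0 (root_class scale br phi H0 \<alpha>))"
  assumes reg: "regular_hom_lie_color scale eps Lg br phi"
    and maxab: "maximal_abelian_graded_subalgebra scale Lg br phi H"
    and split: "split_alg scale br phi H H0"
    and symm: "symmetric_roots scale br phi H0"
    and U_sub: "module.subspace scale U" "U \<subseteq> H"
    and U_compl: "module.span scale (U \<union> H_part scale br phi H0 \<Lambda>) = H"
                 "U \<inter> H_part scale br phi H0 \<Lambda> = {0}"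
  shows "(\<forall>\<alpha>\<in>\<Lambda>. ideal scale Lg br phi (I \<alpha>))
       \<and> (\<forall>\<alpha>\<in>\<Lambda>. \<forall>\<beta>\<in>\<Lambda>. connected scale br phi H0 \<alpha> \<beta> \<longrightarrow> I \<alpha> = I \<beta>)
       \<and> module.span scale (U \<union> (\<Union>\<alpha>\<in>\<Lambda>. I \<alpha>)) = UNIV
       \<and> (\<forall>\<alpha>\<in>\<Lambda>. \<forall>\<beta>\<in>\<Lambda>. \<not> connected scale br phi H0 \<alpha> \<beta> \<longrightarrow>
            (\<forall>x\<in>I \<alpha>. \<forall>y\<in>I \<beta>. br x y = 0))"
proof -
  have h: "HLC scale eps Lg br phi H U"
    unfolding HLC_def
  proof (intro conjI)
    show "regular_hom_lie_color scale eps Lg br phi" by (rule reg)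
    show "maximal_abelian_graded_subalgebra scale Lg br phi H" by (rule maxab)
    show "split_alg scale br phi H (H \<inter> Lg 0)" using split unfolding H0_def .
    show "symmetric_roots scale br phi (H \<inter> Lg 0)" using symm unfolding H0_def .
    show "module.span scale (U \<union> H_part scale br phi (H \<inter> Lg 0) (roots scale br phi (H \<inter> Lg 0))) = H"
      using U_compl(1) unfolding H0_def \<Lambda>_def .
  qed
  show ?thesis using HLC.main[OF h] unfolding I_def \<Lambda>_def H0_def .
qed


end
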